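(* Let $A\in\mathcal{C}^{n\times n}$ be diagonalizable with eigenvalues $\nu_1,\dots,\nu_n\in\mathcal{R}$ (with multiplicity) that are at most finite and satisfy $$1=\nu_1[0]>|\nu_2[0]|\ge\dots\ge|\nu_n[0]|.$$ Let $\mathbf x\in\mathcal{C}^n$ be written as $\mathbf x=\mathbf w_1+\dots+\mathbf w_n$ with $A\mathbf w_j=\nu_j\mathbf w_j$, and assume (i) all $\mathbf w_j$ have at most finite entries and (ii) $\mathbf w_1[0]\neq\mathbf 0$. Then for $\mathbf x_k:=A^k\mathbf x$, $$\frac{\mathbf x_k}{\|\mathbf x_k\|_2}\xrightarrow{wk}\frac{\mathbf w_1}{\|\mathbf w_1\|_2}.$$
   Context: The Levi-Civita field $\mathcal{R}$ (resp. $\mathcal{C}$) is the set of functions $a:\mathbb Q\to\mathbb R$ (resp. $\mathbb C$) with left-finite support (for every $r\in\mathbb Q$ only finitely many $q<r$ with $a(q)\ne0$), written $a[q]:=a(q)$; addition is pointwise, multiplication is $(ab)[q]=\sum_{q_1+q_2=q}a[q_1]b[q_2]$; $\mathcal{R}$ is a real closed ordered field ($a\succ b$ iff $(a-b)[\lambda(a-b)]>0$) and $\mathcal{C}=\mathcal{R}(i)$ is algebraically closed. $\lambda(a)=\min\{q:a[q]\ne0\}$ ($\lambda(0)=+\infty$); $a$ is at most finite if $\lambda(a)\ge0$. Absolute value: on $\mathcal{R}$, $|a|=a$ if $a\succeq0$ and $-a$ otherwise; on $\mathcal{C}$, $|a+ib|=\sqrt{a^2+b^2}$ for $a,b\in\mathcal{R}$.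 For $r\in\mathbb Q$, $\|a\|_r:=\sup_{q\le r}|a[q]|\in\mathbb R$. Weak convergence $a_n\xrightarrow{wk}a$: for every real $r>0$ there is $N_0$ with $\|a_n-a\|_{1/r}<r$ for all $n>N_0$. For vectors, weak convergence is coordinatewise, $\mathbf x[0]:=(\mathbf x^1[0],\dots,\mathbf x^n[0])\in\mathbb C^n$, and $\|\mathbf x\|_2=\sqrt{|\mathbf x^1|^2+\dots+|\mathbf x^n|^2}$. *)

theory Defs
  imports Complex_Main
begin

text \<open>Elements of the Levi-Civita field C, represented as functions from Q to the
  complex numbers; membership in C is the left-finiteness predicate. Elements of R
  are those with purely real coefficients.\<close>

type_synonym lc = "rat \<Rightarrow> complex"

definition left_finite :: "lc \<Rightarrow> bool" where
  "left_finite a \<longleftrightarrow> (\<forall>r. finite {q. q < r \<and> a q \<noteq> 0})"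

definition lc_real :: "lc \<Rightarrow> bool" where
  "lc_real a \<longleftrightarrow> (\<forall>q. Im (a q) = 0)"

definition lc_zero :: lc where "lc_zero = (\<lambda>q. 0)"
definition lc_one :: lc where "lc_one = (\<lambda>q. if q = 0 then 1 else 0)"
definition lc_add :: "lc \<Rightarrow> lc \<Rightarrow> lc" where "lc_add a b = (\<lambda>q. a q + b q)"
definition lc_sub :: "lc \<Rightarrow> lc \<Rightarrow> lc" where "lc_sub a b = (\<lambda>q. a q - b q)"

text \<open>Cauchy product (ab)[q] = sum over q1+q2=q of a[q1] b[q2] (finite sum for
  left-finite a, b).\<close>
definition lc_mult :: "lc \<Rightarrow> lc \<Rightarrow> lc" where
  "lc_mult a b = (\<lambda>q. \<Sum>(q1, q2) \<in> {(q1, q2). q1 + q2 = q \<and> a q1 \<noteq> 0 \<and> b q2 \<noteq> 0}.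
                         a q1 * b q2)"

definition lc_sum :: "nat \<Rightarrow> (nat \<Rightarrow> lc) \<Rightarrow> lc" where
  "lc_sum n f = (\<lambda>q. \<Sum>j<n. f j q)"

definition lc_inv :: "lc \<Rightarrow> lc" where
  "lc_inv a = (THE b. left_finite b \<and> lc_mult a b = lc_one)"

definition lc_at_most_finite :: "lc \<Rightarrow> bool" where
  "lc_at_most_finite a \<longleftrightarrow> (\<forall>q<0. a q = 0)"

definition lc_pos :: "lc \<Rightarrow> bool" where
  "lc_pos a \<longleftrightarrow> (\<exists>q. a q \<noteq> 0 \<and> (\<forall>p<q. a p = 0) \<and> Re (a q) > 0)"

definition lc_nonneg :: "lc \<Rightarrow> bool" where
  "lc_nonneg a \<longleftrightarrow> a = lc_zero \<or> lc_pos a"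

text \<open>Square root of a nonnegative element of R (R is real closed).\<close>
definition lc_sqrt :: "lc \<Rightarrow> lc" where
  "lc_sqrt t = (THE s. left_finite s \<and> lc_real s \<and> lc_nonneg s \<and> lc_mult s s = t)"

definition lc_re :: "lc \<Rightarrow> lc" where "lc_re z = (\<lambda>q. complex_of_real (Re (z q)))"
definition lc_im :: "lc \<Rightarrow> lc" where "lc_im z = (\<lambda>q. complex_of_real (Im (z q)))"

definition lc_cabs :: "lc \<Rightarrow> lc" where
  "lc_cabs z = lc_sqrt (lc_add (lc_mult (lc_re z) (lc_re z)) (lc_mult (lc_im z) (lc_im z)))"

text \<open>Vectors in C^n: functions nat => lc, coordinates i < n.\<close>
definition lc_norm2 :: "nat \<Rightarrow> (nat \<Rightarrow> lc) \<Rightarrow> lc" where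
  "lc_norm2 n x = lc_sqrt (lc_sum n (\<lambda>i. lc_mult (lc_cabs (x i)) (lc_cabs (x i))))"

definition lc_normalize :: "nat \<Rightarrow> (nat \<Rightarrow> lc) \<Rightarrow> nat \<Rightarrow> lc" where
  "lc_normalize n x = (\<lambda>i. lc_mult (lc_inv (lc_norm2 n x)) (x i))"

definition lc_mat_vec :: "nat \<Rightarrow> (nat \<Rightarrow> nat \<Rightarrow> lc) \<Rightarrow> (nat \<Rightarrow> lc) \<Rightarrow> nat \<Rightarrow> lc" where
  "lc_mat_vec n A x = (\<lambda>i. lc_sum n (\<lambda>j. lc_mult (A i j) (x j)))"

definition lc_mat_mult :: "nat \<Rightarrow> (nat \<Rightarrow> nat \<Rightarrow> lc) \<Rightarrow> (nat \<Rightarrow> nat \<Rightarrow> lc) \<Rightarrow> nat \<Rightarrow> nat \<Rightarrow> lc" where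
  "lc_mat_mult n A B = (\<lambda>i k. lc_sum n (\<lambda>j. lc_mult (A i j) (B j k)))"

definition lc_id_mat :: "nat \<Rightarrow> nat \<Rightarrow> lc" where
  "lc_id_mat = (\<lambda>i j. if i = j then lc_one else lc_zero)"

definition lc_diag :: "(nat \<Rightarrow> lc) \<Rightarrow> nat \<Rightarrow> nat \<Rightarrow> lc" where
  "lc_diag d = (\<lambda>i j. if i = j then d i else lc_zero)"

definition lc_diagonalizable_with :: "nat \<Rightarrow> (nat \<Rightarrow> nat \<Rightarrow> lc) \<Rightarrow> (nat \<Rightarrow> lc) \<Rightarrow> bool" where
  "lc_diagonalizable_with n A nu \<longleftrightarrow>
     (\<exists>P Q. (\<forall>i<n. \<forall>j<n. left_finite (P i j) \<and> left_finite (Q i j)) \<and>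
            (\<forall>i<n. \<forall>j<n. lc_mat_mult n P Q i j = lc_id_mat i j) \<and>
            (\<forall>i<n. \<forall>j<n. lc_mat_mult n Q P i j = lc_id_mat i j) \<and>
            (\<forall>i<n. \<forall>j<n. A i j = lc_mat_mult n (lc_mat_mult n P (lc_diag nu)) Q i j))"

definition lc_seminorm :: "real \<Rightarrow> lc \<Rightarrow> real" where
  "lc_seminorm t a = Sup {cmod (a q) | q. real_of_rat q \<le> t}"

definition lc_wk_conv :: "(nat \<Rightarrow> lc) \<Rightarrow> lc \<Rightarrow> bool" where
  "lc_wk_conv s l \<longleftrightarrow>
     (\<forall>r::real. r > 0 \<longrightarrow> (\<exists>N0. \<forall>k>N0. lc_seminorm (1 / r) (lc_sub (s k) l) < r))"

definition lc_vec_wk_conv :: "nat \<Rightarrow> (nat \<Rightarrow> nat \<Rightarrow> lc) \<Rightarrow> (nat \<Rightarrow> lc) \<Rightarrow> bool" where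
  "lc_vec_wk_conv n s l \<longleftrightarrow> (\<forall>i<n. lc_wk_conv (\<lambda>k. s k i) (l i))"

end

theory Submission
  imports Defs "HOL-Library.Poly_Mapping"
begin

lemma lf_lead:
  assumes "left_finite a" "a q1 \<noteq> 0"
  shows "\<exists>q0. a q0 \<noteq> 0 \<and> (\<forall>p<q0. a p = 0)"
proof -
  let ?F = "{q. q < q1 + 1 \<and> a q \<noteq> 0}"
  have fin: "finite ?F" using assms(1) unfolding left_finite_def by auto
  have ne: "q1 \<in> ?F" using assms(2) by auto
  define q0 where "q0 = Min ?F"
  have "q0 \<in> ?F" unfolding q0_def using fin ne Min_in by blast
  moreover have "\<forall>p<q0. a p = 0"
  proof (intro allI impI, rule ccontr)
    fix p assume "p < q0" "a p \<noteq> 0"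
    moreover have "q0 \<le> q1" unfolding q0_def using fin ne Min_le by blast
    ultimately have "p \<in> ?F" by auto
    then have "q0 \<le> p" unfolding q0_def using fin Min_le by blast
    with \<open>p < q0\<close> show False by simp
  qed
  ultimately show ?thesis by auto
qed

lemma lf_lb:
  assumes "left_finite a"
  shows "\<exists>L. \<forall>p<L. a p = 0"
proof (cases "\<exists>q. a q \<noteq> 0")
  case True
  then show ?thesis using lf_lead[OF assms] by blast
next
  case False
  then show ?thesis by auto
qed

definition trunc :: "rat \<Rightarrow> lc \<Rightarrow> lc" where
  "trunc R a = (\<lambda>q. if q < R then a q else 0)"

lemma trunc_fin: "left_finite a \<Longrightarrow> finite {q. trunc R a q \<noteq> 0}"
proof -
  assume "left_finite a"
  then have "finite {q. q < R \<and> a q \<noteq> 0}" unfolding left_finite_def by auto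
  moreover have "{q. trunc R a q \<noteq> 0} = {q. q < R \<and> a q \<noteq> 0}" unfolding trunc_def by auto
  ultimately show ?thesis by simp
qed

lemma lc_mult_local:
  assumes "\<forall>p<La. a p = 0" "\<forall>p<Lb. b p = 0" "\<forall>p<La. a' p = 0" "\<forall>p<Lb. b' p = 0"
    "\<forall>p. p \<le> q - Lb \<longrightarrow> a' p = a p" "\<forall>p. p \<le> q - La \<longrightarrow> b' p = b p"
  shows "lc_mult a b q = lc_mult a' b' q"
proof -
  let ?S = "{(q1, q2). q1 + q2 = q \<and> a q1 \<noteq> 0 \<and> b q2 \<noteq> 0}"
  let ?S' = "{(q1, q2). q1 + q2 = q \<and> a' q1 \<noteq> 0 \<and> b' q2 \<noteq> 0}"
  have key: "\<And>q1 q2. q1 + q2 = q \<Longrightarrow> (a q1 \<noteq> 0 \<and> b q2 \<noteq> 0) \<or> (a' q1 \<noteq> 0 \<and> b' q2 \<noteq> 0)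
      \<Longrightarrow> a' q1 = a q1 \<and> b' q2 = b q2"
  proof -
    fix q1 q2 assume h: "q1 + q2 = q" "(a q1 \<noteq> 0 \<and> b q2 \<noteq> 0) \<or> (a' q1 \<noteq> 0 \<and> b' q2 \<noteq> 0)"
    then have "q1 \<ge> La \<and> q2 \<ge> Lb" using assms(1-4) by (metis not_le)
    moreover have "q1 \<le> q - Lb" "q2 \<le> q - La" using h(1) \<open>q1 \<ge> La \<and> q2 \<ge> Lb\<close> by linarith+
    ultimately show "a' q1 = a q1 \<and> b' q2 = b q2" using assms(5,6) by blast
  qed
  have "?S \<subseteq> ?S'"
  proof
    fix x assume "x \<in> ?S"
    then obtain q1 q2 where h: "x = (q1, q2)" "q1 + q2 = q" "a q1 \<noteq> 0" "b q2 \<noteq> 0" by blast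
    then have "a' q1 = a q1 \<and> b' q2 = b q2" using key by blast
    then show "x \<in> ?S'" using h by simp
  qed
  moreover have "?S' \<subseteq> ?S"
  proof
    fix x assume "x \<in> ?S'"
    then obtain q1 q2 where h: "x = (q1, q2)" "q1 + q2 = q" "a' q1 \<noteq> 0" "b' q2 \<noteq> 0" by blast
    then have "a' q1 = a q1 \<and> b' q2 = b q2" using key by blast
    then show "x \<in> ?S" using h by simp
  qed
  ultimately have SS: "?S = ?S'" by (rule subset_antisym)
  have "(\<Sum>(q1, q2)\<in>?S. a q1 * b q2) = (\<Sum>(q1, q2)\<in>?S'. a' q1 * b' q2)"
  proof (rule sum.cong[OF SS])
    fix x assume "x \<in> ?S'"
    then obtain q1 q2 where x: "x = (q1, q2)" "q1 + q2 = q" "a' q1 \<noteq> 0" "b' q2 \<noteq> 0" by blast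
    then have "a' q1 = a q1 \<and> b' q2 = b q2" using key by blast
    then show "(case x of (q1, q2) \<Rightarrow> a q1 * b q2) = (case x of (q1, q2) \<Rightarrow> a' q1 * b' q2)"
      using x by simp
  qed
  then show ?thesis unfolding lc_mult_def .
qed

lemma lc_mult_finsupp:
  assumes "finite {q. f q \<noteq> 0}" "finite {q. g q \<noteq> 0}"
  shows "lc_mult f g k = prod_fun f g k"
proof -
  have "prod_fun f g k = (\<Sum>(a, b). f a * g b when k = a + b)" using prod_fun_unfold_prod[OF assms] .
  also have "\<dots> = sum (\<lambda>(a, b). f a * g b when k = a + b)
       {p. (case p of (a, b) \<Rightarrow> f a * g b when k = a + b) \<noteq> 0}" by (rule Sum_any.expand_set)
  also have "{p. (case p of (a, b) \<Rightarrow> f a * g b when k = a + b) \<noteq> 0}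
      = {(q1, q2). q1 + q2 = k \<and> f q1 \<noteq> 0 \<and> g q2 \<noteq> 0}" by (auto simp: when_def split: if_splits)
  also have "sum (\<lambda>(a, b). f a * g b when k = a + b) {(q1, q2). q1 + q2 = k \<and> f q1 \<noteq> 0 \<and> g q2 \<noteq> 0}
      = lc_mult f g k" unfolding lc_mult_def by (rule sum.cong) (auto simp: when_def split: if_splits)
  finally show ?thesis by simp
qed

lemma pm_mult:
  fixes f g :: lc
  assumes "finite {q. f q \<noteq> 0}" "finite {q. g q \<noteq> 0}"
  shows "Abs_poly_mapping f * Abs_poly_mapping g = Abs_poly_mapping (prod_fun f g)"
proof -
  have "Poly_Mapping.lookup (Abs_poly_mapping f * Abs_poly_mapping g) = prod_fun f g"
    by (simp add: times_poly_mapping.rep_eq assms)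
  then show ?thesis by (metis lookup_inverse)
qed

lemma pf_assoc:
  fixes f g h :: lc
  assumes fa: "finite {q. f q \<noteq> 0}" and fb: "finite {q. g q \<noteq> 0}" and fc: "finite {q. h q \<noteq> 0}"
  shows "prod_fun (prod_fun f g) h = prod_fun f (prod_fun g h)"
proof -
  have f1: "finite {q. prod_fun f g q \<noteq> 0}" using finite_prod_fun[OF fa fb] .
  have f2: "finite {q. prod_fun g h q \<noteq> 0}" using finite_prod_fun[OF fb fc] .
  have "Abs_poly_mapping f * Abs_poly_mapping g * Abs_poly_mapping h
      = Abs_poly_mapping f * (Abs_poly_mapping g * Abs_poly_mapping h)"
    by (simp add: mult.assoc)
  then have "Abs_poly_mapping (prod_fun (prod_fun f g) h) = Abs_poly_mapping (prod_fun f (prod_fun g h))"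
    by (simp add: pm_mult fa fb fc f1 f2)
  moreover have "finite {q. prod_fun (prod_fun f g) h q \<noteq> 0}" using finite_prod_fun[OF f1 fc] .
  moreover have "finite {q. prod_fun f (prod_fun g h) q \<noteq> 0}" using finite_prod_fun[OF fa f2] .
  ultimately show ?thesis by (metis lookup_Abs_poly_mapping)
qed

lemma pf_distrib:
  fixes f g h :: lc
  assumes fa: "finite {q. f q \<noteq> 0}" and fb: "finite {q. g q \<noteq> 0}" and fc: "finite {q. h q \<noteq> 0}"
  shows "prod_fun f (\<lambda>k. g k + h k) k = prod_fun f g k + prod_fun f h k"
proof -
  have fgh: "finite {q. g q + h q \<noteq> 0}"
  proof -
    have "{q. g q + h q \<noteq> 0} \<subseteq> {q. g q \<noteq> 0} \<union> {q. h q \<noteq> 0}" by auto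
    then show ?thesis using fb fc finite_subset by blast
  qed
  have e: "Abs_poly_mapping g + Abs_poly_mapping h = Abs_poly_mapping (\<lambda>k. g k + h k)"
  proof -
    have "Poly_Mapping.lookup (Abs_poly_mapping g + Abs_poly_mapping h) = (\<lambda>k. g k + h k)"
      by (rule ext) (simp add: lookup_add fb fc)
    then show ?thesis by (metis lookup_inverse)
  qed
  have "Abs_poly_mapping f * (Abs_poly_mapping g + Abs_poly_mapping h)
      = Abs_poly_mapping f * Abs_poly_mapping g + Abs_poly_mapping f * Abs_poly_mapping h"
    by (simp add: distrib_left)
  then have "Poly_Mapping.lookup (Abs_poly_mapping (prod_fun f (\<lambda>k. g k + h k))) k
     = Poly_Mapping.lookup (Abs_poly_mapping (prod_fun f g) + Abs_poly_mapping (prod_fun f h)) k"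
    by (simp add: e pm_mult fa fb fc fgh)
  then show ?thesis
    by (simp add: lookup_add finite_prod_fun fa fb fc fgh)
qed

lemma lc_mult_trunc:
  assumes "\<forall>p<L. a p = 0" "\<forall>p<L. b p = 0" "q - L < R"
  shows "lc_mult a b q = lc_mult (trunc R a) (trunc R b) q"
proof (rule lc_mult_local[where La=L and Lb=L])
  show "\<forall>p<L. a p = 0" "\<forall>p<L. b p = 0" by fact+
  show "\<forall>p<L. trunc R a p = 0" "\<forall>p<L. trunc R b p = 0" using assms(1,2) unfolding trunc_def by simp_all
  show "\<forall>p. p \<le> q - L \<longrightarrow> trunc R a p = a p" "\<forall>p. p \<le> q - L \<longrightarrow> trunc R b p = b p"
    using assms(3) unfolding trunc_def by (simp_all add: order_le_less_trans)
qed

lemma lb_mult: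
  assumes "\<forall>p<La. a p = 0" "\<forall>p<Lb. b p = 0" "q < La + Lb"
  shows "lc_mult a b q = 0"
proof -
  have E: "{(q1, q2). q1 + q2 = q \<and> a q1 \<noteq> 0 \<and> b q2 \<noteq> 0} = {}"
  proof (rule ccontr)
    assume "{(q1, q2). q1 + q2 = q \<and> a q1 \<noteq> 0 \<and> b q2 \<noteq> 0} \<noteq> {}"
    then obtain q1 q2 where h: "q1 + q2 = q" "a q1 \<noteq> 0" "b q2 \<noteq> 0" by blast
    then have "q1 \<ge> La" "q2 \<ge> Lb" using assms(1,2) by (meson not_less)+
    then show False using h(1) assms(3) by linarith
  qed
  show ?thesis unfolding lc_mult_def E by (rule sum.empty)
qed

lemma lf_mult:
  assumes "left_finite a" "left_finite b"
  shows "left_finite (lc_mult a b)"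
  unfolding left_finite_def
proof
  fix r
  obtain La where La: "\<forall>p<La. a p = 0" using lf_lb[OF assms(1)] by blast
  obtain Lb where Lb: "\<forall>p<Lb. b p = 0" using lf_lb[OF assms(2)] by blast
  define L where "L = min La Lb"
  have L: "\<forall>p<L. a p = 0" "\<forall>p<L. b p = 0" using La Lb unfolding L_def by auto
  define R where "R = r - L"
  have "{q. q < r \<and> lc_mult a b q \<noteq> 0} \<subseteq> {q. prod_fun (trunc R a) (trunc R b) q \<noteq> 0}"
  proof
    fix q assume "q \<in> {q. q < r \<and> lc_mult a b q \<noteq> 0}"
    then have q: "q < r" "lc_mult a b q \<noteq> 0" by auto
    have "lc_mult a b q = lc_mult (trunc R a) (trunc R b) q"
      using lc_mult_trunc[OF L] q unfolding R_def by simp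
    also have "\<dots> = prod_fun (trunc R a) (trunc R b) q"
      using lc_mult_finsupp[OF trunc_fin[OF assms(1)] trunc_fin[OF assms(2)]] .
    finally show "q \<in> {q. prod_fun (trunc R a) (trunc R b) q \<noteq> 0}" using q by simp
  qed
  moreover have "finite {q. prod_fun (trunc R a) (trunc R b) q \<noteq> 0}"
    using finite_prod_fun[OF trunc_fin[OF assms(1)] trunc_fin[OF assms(2)]] .
  ultimately show "finite {q. q < r \<and> lc_mult a b q \<noteq> 0}" by (rule finite_subset)
qed

lemma trunc_lb: "\<forall>p<L. a p = 0 \<Longrightarrow> \<forall>p<L. trunc R a p = 0"
  by (simp add: trunc_def)

lemma lc_mult_assoc:
  assumes "left_finite a" "left_finite b" "left_finite c"
  shows "lc_mult (lc_mult a b) c = lc_mult a (lc_mult b c)"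
proof
  fix q
  obtain La where La: "\<forall>p<La. a p = 0" using lf_lb[OF assms(1)] by blast
  obtain Lb where Lb: "\<forall>p<Lb. b p = 0" using lf_lb[OF assms(2)] by blast
  obtain Lc where Lc: "\<forall>p<Lc. c p = 0" using lf_lb[OF assms(3)] by blast
  define L where "L = min 0 (min La (min Lb Lc))"
  have L: "\<forall>p<L. a p = 0" "\<forall>p<L. b p = 0" "\<forall>p<L. c p = 0" "L \<le> 0"
    using La Lb Lc unfolding L_def by auto
  have L2: "\<forall>p<2*L. a p = 0" "\<forall>p<2*L. b p = 0" "\<forall>p<2*L. c p = 0" using L by auto
  define R where "R = q - 3 * L + 1"
  let ?ta = "trunc R a" and ?tb = "trunc R b" and ?tc = "trunc R c"
  have fa: "finite {q. ?ta q \<noteq> 0}" and fb: "finite {q. ?tb q \<noteq> 0}" and fc: "finite {q. ?tc q \<noteq> 0}"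
    using trunc_fin[OF assms(1)] trunc_fin[OF assms(2)] trunc_fin[OF assms(3)] by blast+
  have tL: "\<forall>p<L. ?ta p = 0" "\<forall>p<L. ?tb p = 0" "\<forall>p<L. ?tc p = 0" using L trunc_lb by blast+
  have tL2: "\<forall>p<2*L. ?ta p = 0" "\<forall>p<2*L. ?tb p = 0" "\<forall>p<2*L. ?tc p = 0" using L2 trunc_lb by blast+
  have ab0: "\<forall>p<2*L. lc_mult a b p = 0" using lb_mult[OF L(1,2)] by auto
  have bc0: "\<forall>p<2*L. lc_mult b c p = 0" using lb_mult[OF L(2,3)] by auto
  have tab0: "\<forall>p<2*L. lc_mult ?ta ?tb p = 0" using lb_mult[OF tL(1,2)] by auto
  have tbc0: "\<forall>p<2*L. lc_mult ?tb ?tc p = 0" using lb_mult[OF tL(2,3)] by auto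
  have "lc_mult (lc_mult a b) c q = lc_mult (lc_mult ?ta ?tb) ?tc q"
  proof (rule lc_mult_local[where La="2*L" and Lb="2*L"])
    show "\<forall>p<2*L. lc_mult a b p = 0" by (rule ab0)
    show "\<forall>p<2*L. c p = 0" by (rule L2(3))
    show "\<forall>p<2*L. lc_mult ?ta ?tb p = 0" by (rule tab0)
    show "\<forall>p<2*L. ?tc p = 0" by (rule tL2(3))
    show "\<forall>p. p \<le> q - 2 * L \<longrightarrow> lc_mult ?ta ?tb p = lc_mult a b p"
    proof (intro allI impI)
      fix p assume "p \<le> q - 2 * L"
      then have "p - L < R" unfolding R_def using L(4) by linarith
      then show "lc_mult ?ta ?tb p = lc_mult a b p" using lc_mult_trunc[OF L(1,2)] by simp
    qed
    show "\<forall>p. p \<le> q - 2 * L \<longrightarrow> ?tc p = c p"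
      unfolding trunc_def R_def using L(4) by auto
  qed
  also have "\<dots> = prod_fun (prod_fun ?ta ?tb) ?tc q"
  proof -
    have "lc_mult ?ta ?tb = prod_fun ?ta ?tb" using lc_mult_finsupp[OF fa fb] by (rule ext)
    moreover have "finite {q. prod_fun ?ta ?tb q \<noteq> 0}" using finite_prod_fun[OF fa fb] .
    ultimately show ?thesis using lc_mult_finsupp fc by metis
  qed
  also have "\<dots> = prod_fun ?ta (prod_fun ?tb ?tc) q" using pf_assoc[OF fa fb fc] by simp
  also have "\<dots> = lc_mult ?ta (lc_mult ?tb ?tc) q"
  proof -
    have "lc_mult ?tb ?tc = prod_fun ?tb ?tc" using lc_mult_finsupp[OF fb fc] by (rule ext)
    moreover have "finite {q. prod_fun ?tb ?tc q \<noteq> 0}" using finite_prod_fun[OF fb fc] .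
    ultimately show ?thesis using lc_mult_finsupp fa by metis
  qed
  also have "\<dots> = lc_mult a (lc_mult b c) q"
  proof (rule lc_mult_local[where La="2*L" and Lb="2*L"])
    show "\<forall>p<2*L. ?ta p = 0" by (rule tL2(1))
    show "\<forall>p<2*L. lc_mult ?tb ?tc p = 0" by (rule tbc0)
    show "\<forall>p<2*L. a p = 0" by (rule L2(1))
    show "\<forall>p<2*L. lc_mult b c p = 0" by (rule bc0)
    show "\<forall>p. p \<le> q - 2 * L \<longrightarrow> a p = ?ta p"
      unfolding trunc_def R_def using L(4) by auto
    show "\<forall>p. p \<le> q - 2 * L \<longrightarrow> lc_mult b c p = lc_mult ?tb ?tc p"
    proof (intro allI impI)
      fix p assume "p \<le> q - 2 * L"
      then have "p - L < R" unfolding R_def using L(4) by linarith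
      then show "lc_mult b c p = lc_mult ?tb ?tc p" using lc_mult_trunc[OF L(2,3)] by simp
    qed
  qed
  finally show "lc_mult (lc_mult a b) c q = lc_mult a (lc_mult b c) q" .
qed

lemma lc_mult_comm: "lc_mult a b = lc_mult b a"
proof
  fix q
  show "lc_mult a b q = lc_mult b a q" unfolding lc_mult_def
    by (rule sum.reindex_bij_witness[where i=prod.swap and j=prod.swap]) (auto simp: add.commute mult.commute)
qed

lemma trunc_add: "trunc R (lc_add b c) = (\<lambda>k. trunc R b k + trunc R c k)"
  by (auto simp: trunc_def lc_add_def)

lemma lc_mult_distrib:
  assumes "left_finite a" "left_finite b" "left_finite c"
  shows "lc_mult a (lc_add b c) = lc_add (lc_mult a b) (lc_mult a c)"
proof
  fix q
  obtain La where La: "\<forall>p<La. a p = 0" using lf_lb[OF assms(1)] by blast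
  obtain Lb where Lb: "\<forall>p<Lb. b p = 0" using lf_lb[OF assms(2)] by blast
  obtain Lc where Lc: "\<forall>p<Lc. c p = 0" using lf_lb[OF assms(3)] by blast
  define L where "L = min La (min Lb Lc)"
  have L: "\<forall>p<L. a p = 0" "\<forall>p<L. b p = 0" "\<forall>p<L. c p = 0" "\<forall>p<L. lc_add b c p = 0"
    using La Lb Lc unfolding L_def lc_add_def by auto
  define R where "R = q - L + 1"
  have R: "q - L < R" unfolding R_def by simp
  have fa: "finite {q. trunc R a q \<noteq> 0}" and fb: "finite {q. trunc R b q \<noteq> 0}"
    and fc: "finite {q. trunc R c q \<noteq> 0}"
    using trunc_fin[OF assms(1)] trunc_fin[OF assms(2)] trunc_fin[OF assms(3)] by blast+
  have fbc: "finite {q. trunc R (lc_add b c) q \<noteq> 0}"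
  proof -
    have "{q. trunc R (lc_add b c) q \<noteq> 0} \<subseteq> {q. trunc R b q \<noteq> 0} \<union> {q. trunc R c q \<noteq> 0}"
      by (auto simp: trunc_add)
    then show ?thesis using fb fc finite_subset by blast
  qed
  have "lc_mult a (lc_add b c) q = lc_mult (trunc R a) (trunc R (lc_add b c)) q"
    using lc_mult_trunc[OF L(1,4) R] .
  also have "\<dots> = prod_fun (trunc R a) (trunc R (lc_add b c)) q" using lc_mult_finsupp[OF fa fbc] .
  also have "\<dots> = prod_fun (trunc R a) (trunc R b) q + prod_fun (trunc R a) (trunc R c) q"
    unfolding trunc_add using pf_distrib[OF fa fb fc] .
  also have "\<dots> = lc_mult a b q + lc_mult a c q"
    using lc_mult_finsupp[OF fa fb] lc_mult_finsupp[OF fa fc] lc_mult_trunc[OF L(1,2) R] lc_mult_trunc[OF L(1,3) R]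
    by simp
  finally show "lc_mult a (lc_add b c) q = lc_add (lc_mult a b) (lc_mult a c) q"
    unfolding lc_add_def by simp
qed

lemma lc_mult_one: "lc_mult lc_one a = a"
proof
  fix q
  have "{(q1, q2). q1 + q2 = q \<and> lc_one q1 \<noteq> 0 \<and> a q2 \<noteq> 0} = (if a q \<noteq> 0 then {(0, q)} else {})"
    by (auto simp: lc_one_def split: if_splits)
  then show "lc_mult lc_one a q = a q" unfolding lc_mult_def by (simp add: lc_one_def)
qed

lemma lc_mult_zero: "lc_mult lc_zero a = lc_zero"
  unfolding lc_mult_def lc_zero_def by simp

lemma lf_add: "left_finite a \<Longrightarrow> left_finite b \<Longrightarrow> left_finite (lc_add a b)"
  unfolding left_finite_def
proof
  fix r assume a: "\<forall>r. finite {q. q < r \<and> a q \<noteq> 0}" and b: "\<forall>r. finite {q. q < r \<and> b q \<noteq> 0}"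
  have "{q. q < r \<and> lc_add a b q \<noteq> 0} \<subseteq> {q. q < r \<and> a q \<noteq> 0} \<union> {q. q < r \<and> b q \<noteq> 0}"
    by (auto simp: lc_add_def)
  then show "finite {q. q < r \<and> lc_add a b q \<noteq> 0}" using a b finite_subset by blast
qed

lemma lf_neg: "left_finite a \<Longrightarrow> left_finite (\<lambda>q. - a q)"
  unfolding left_finite_def by simp

lemma lf_sub: "left_finite a \<Longrightarrow> left_finite b \<Longrightarrow> left_finite (lc_sub a b)"
proof -
  assume "left_finite a" "left_finite b"
  then have "left_finite (lc_add a (\<lambda>q. - b q))" using lf_add lf_neg by blast
  moreover have "lc_add a (\<lambda>q. - b q) = lc_sub a b" by (auto simp: lc_add_def lc_sub_def)
  ultimately show ?thesis by simp
qed

lemma lf_zero: "left_finite lc_zero" unfolding left_finite_def lc_zero_def by simp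

lemma lf_one: "left_finite lc_one"
  unfolding left_finite_def lc_one_def
proof
  fix r
  have "{q. q < r \<and> (if q = 0 then 1 else 0) \<noteq> (0::complex)} \<subseteq> {0}" by auto
  then show "finite {q. q < r \<and> (if q = 0 then 1 else 0) \<noteq> (0::complex)}" using finite_subset by blast
qed


typedef lf = "{a::lc. left_finite a}" morphisms Rep_lf Abs_lf
  using lf_zero by blast

setup_lifting type_definition_lf

instantiation lf :: comm_ring_1
begin
lift_definition zero_lf :: lf is lc_zero by (rule lf_zero)
lift_definition one_lf :: lf is lc_one by (rule lf_one)
lift_definition plus_lf :: "lf \<Rightarrow> lf \<Rightarrow> lf" is lc_add by (rule lf_add)
lift_definition minus_lf :: "lf \<Rightarrow> lf \<Rightarrow> lf" is lc_sub by (rule lf_sub)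
lift_definition uminus_lf :: "lf \<Rightarrow> lf" is "\<lambda>a q. - a q" by (rule lf_neg)
lift_definition times_lf :: "lf \<Rightarrow> lf \<Rightarrow> lf" is lc_mult by (rule lf_mult)
instance
proof
  fix a b c :: lf
  show "a * b * c = a * (b * c)" by transfer (rule lc_mult_assoc)
  show "a * b = b * a" by transfer (rule lc_mult_comm)
  show "1 * a = a" by transfer (rule lc_mult_one)
  show "(a + b) * c = a * c + b * c"
    by transfer (metis lc_mult_comm lc_mult_distrib)
  show "a + b + c = a + (b + c)" by transfer (simp add: lc_add_def add.assoc)
  show "a + b = b + a" by transfer (simp add: lc_add_def add.commute)
  show "0 + a = a" by transfer (simp add: lc_add_def lc_zero_def)
  show "- a + a = 0" by transfer (simp add: lc_add_def lc_zero_def)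
  show "a - b = a + - b" by transfer (simp add: lc_add_def lc_sub_def)
  show "(0::lf) \<noteq> 1" by transfer (simp add: lc_zero_def lc_one_def fun_eq_iff)
qed
end

lemma lead_mult:
  assumes "\<forall>p<qa. a p = 0" "\<forall>p<qb. b p = 0"
  shows "lc_mult a b (qa + qb) = a qa * b qb"
proof -
  let ?S = "{(q1, q2). q1 + q2 = qa + qb \<and> a q1 \<noteq> 0 \<and> b q2 \<noteq> 0}"
  have sub: "?S \<subseteq> {(qa, qb)}"
  proof
    fix x assume "x \<in> ?S"
    then obtain q1 q2 where h: "x = (q1, q2)" "q1 + q2 = qa + qb" "a q1 \<noteq> 0" "b q2 \<noteq> 0" by blast
    then have "q1 \<ge> qa" "q2 \<ge> qb" using assms by (meson not_less)+
    then have "q1 = qa" "q2 = qb" using h(2) by linarith+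
    then show "x \<in> {(qa, qb)}" using h(1) by simp
  qed
  show ?thesis
  proof (cases "a qa \<noteq> 0 \<and> b qb \<noteq> 0")
    case True
    then have E: "?S = {(qa, qb)}" using sub by auto
    show ?thesis unfolding lc_mult_def E by simp
  next
    case False
    then have E: "?S = {}" using sub by auto
    have "lc_mult a b (qa + qb) = 0" unfolding lc_mult_def E by simp
    then show ?thesis using False by auto
  qed
qed

instance lf :: idom
proof
  fix a b :: lf
  assume "a \<noteq> 0" "b \<noteq> 0"
  then show "a * b \<noteq> 0"
  proof transfer
    fix a b :: lc
    assume a: "left_finite a" "a \<noteq> lc_zero" and b: "left_finite b" "b \<noteq> lc_zero"
    obtain q1 where "a q1 \<noteq> 0" using a(2) by (auto simp: lc_zero_def fun_eq_iff)
    then obtain qa where qa: "a qa \<noteq> 0" "\<forall>p<qa. a p = 0" using lf_lead[OF a(1)] by blast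
    obtain q2 where "b q2 \<noteq> 0" using b(2) by (auto simp: lc_zero_def fun_eq_iff)
    then obtain qb where qb: "b qb \<noteq> 0" "\<forall>p<qb. b p = 0" using lf_lead[OF b(1)] by blast
    have "lc_mult a b (qa + qb) = a qa * b qb" using lead_mult qa(2) qb(2) by blast
    then have "lc_mult a b (qa + qb) \<noteq> 0" using qa(1) qb(1) by simp
    then show "lc_mult a b \<noteq> lc_zero" by (auto simp: lc_zero_def)
  qed
qed

lemma Rep_sum: "Rep_lf (\<Sum>j<n. F j) = lc_sum n (\<lambda>j. Rep_lf (F j))"
proof (induction n)
  case 0
  then show ?case by (simp add: lc_sum_def zero_lf.rep_eq lc_zero_def)
next
  case (Suc n)
  then show ?case by (simp add: lc_sum_def plus_lf.rep_eq lc_add_def)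
qed

lemmas Rep_ops = times_lf.rep_eq plus_lf.rep_eq minus_lf.rep_eq uminus_lf.rep_eq zero_lf.rep_eq one_lf.rep_eq


definition good :: "rat set \<Rightarrow> bool" where
  "good M \<longleftrightarrow> 0 \<in> M \<and> (\<forall>p\<in>M. \<forall>q\<in>M. p + q \<in> M) \<and> (\<forall>p\<in>M. 0 \<le> p) \<and> (\<forall>r. finite {p\<in>M. p < r})"

definition inM :: "rat set \<Rightarrow> lc \<Rightarrow> bool" where
  "inM M a \<longleftrightarrow> (\<forall>q. a q \<noteq> 0 \<longrightarrow> q \<in> M)"

lemma good_fin: "good M \<Longrightarrow> finite {p\<in>M. p < r}" unfolding good_def by blast
lemma good_fin_le: "good M \<Longrightarrow> finite {p\<in>M. p \<le> r}"
proof -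
  assume "good M"
  then have "finite {p\<in>M. p < r + 1}" by (rule good_fin)
  moreover have "{p\<in>M. p \<le> r} \<subseteq> {p\<in>M. p < r + 1}" by auto
  ultimately show ?thesis by (rule finite_subset[rotated])
qed
lemma good_0: "good M \<Longrightarrow> 0 \<in> M" unfolding good_def by blast
lemma good_add: "good M \<Longrightarrow> p \<in> M \<Longrightarrow> q \<in> M \<Longrightarrow> p + q \<in> M" unfolding good_def by blast
lemma good_nonneg: "good M \<Longrightarrow> p \<in> M \<Longrightarrow> 0 \<le> p" unfolding good_def by blast

lemma inM_lf: assumes "good M" "inM M a" shows "left_finite a"
  unfolding left_finite_def
proof
  fix r
  have "{q. q < r \<and> a q \<noteq> 0} \<subseteq> {p\<in>M. p < r}" using assms(2) unfolding inM_def by auto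
  then show "finite {q. q < r \<and> a q \<noteq> 0}" using good_fin[OF assms(1)] finite_subset by blast
qed

lemma inM_lb: "good M \<Longrightarrow> inM M a \<Longrightarrow> q < 0 \<Longrightarrow> a q = 0"
  unfolding inM_def using good_nonneg by (meson not_less)

lemma inM_notin: "inM M a \<Longrightarrow> q \<notin> M \<Longrightarrow> a q = 0"
  unfolding inM_def by blast

lemma lc_mult_M:
  assumes M: "good M" and a: "inM M a" and b: "inM M b"
  shows "lc_mult a b q = (\<Sum>p\<in>{p\<in>M. p \<le> q}. a p * b (q - p))"
proof -
  let ?P = "{p. a p \<noteq> 0 \<and> b (q - p) \<noteq> 0}"
  have "lc_mult a b q = (\<Sum>p\<in>?P. a p * b (q - p))"
    unfolding lc_mult_def
    by (rule sum.reindex_bij_witness[where i="\<lambda>p. (p, q - p)" and j=fst]) auto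
  also have "\<dots> = (\<Sum>p\<in>{p\<in>M. p \<le> q}. a p * b (q - p))"
  proof (rule sum.mono_neutral_left)
    show "finite {p\<in>M. p \<le> q}" using good_fin_le[OF M] .
    show "?P \<subseteq> {p\<in>M. p \<le> q}"
    proof
      fix p assume "p \<in> ?P"
      then have "a p \<noteq> 0" "b (q - p) \<noteq> 0" by auto
      then have "p \<in> M" "q - p \<in> M" using a b unfolding inM_def by auto
      then have "0 \<le> q - p" using good_nonneg[OF M] by blast
      then show "p \<in> {p\<in>M. p \<le> q}" using \<open>p \<in> M\<close> by simp
    qed
    show "\<forall>i\<in>{p\<in>M. p \<le> q} - ?P. a i * b (q - i) = 0" by auto
  qed
  finally show ?thesis .
qed

lemma inM_mult: "inM M a \<Longrightarrow> inM M b \<Longrightarrow> good M \<Longrightarrow> inM M (lc_mult a b)"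
  unfolding inM_def
proof (intro allI impI)
  fix q assume a: "\<forall>q. a q \<noteq> 0 \<longrightarrow> q \<in> M" and b: "\<forall>q. b q \<noteq> 0 \<longrightarrow> q \<in> M" and M: "good M"
    and "lc_mult a b q \<noteq> 0"
  then have "{(q1, q2). q1 + q2 = q \<and> a q1 \<noteq> 0 \<and> b q2 \<noteq> 0} \<noteq> {}"
    unfolding lc_mult_def by force
  then obtain q1 q2 where "q1 + q2 = q" "a q1 \<noteq> 0" "b q2 \<noteq> 0" by blast
  then show "q \<in> M" using a b good_add[OF M] by blast
qed

lemma inM_add: "inM M a \<Longrightarrow> inM M b \<Longrightarrow> inM M (lc_add a b)"
  unfolding inM_def lc_add_def by force
lemma inM_sub: "inM M a \<Longrightarrow> inM M b \<Longrightarrow> inM M (lc_sub a b)"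
  unfolding inM_def lc_sub_def by force
lemma inM_neg: "inM M a \<Longrightarrow> inM M (\<lambda>q. - a q)"
  unfolding inM_def by force
lemma inM_zero: "inM M lc_zero" unfolding inM_def lc_zero_def by simp
lemma inM_one: "good M \<Longrightarrow> inM M lc_one" unfolding inM_def lc_one_def using good_0 by auto
lemma inM_re: "inM M a \<Longrightarrow> inM M (lc_re a)" unfolding inM_def lc_re_def
  by (metis zero_complex.sel(1) of_real_0)
lemma inM_im: "inM M a \<Longrightarrow> inM M (lc_im a)" unfolding inM_def lc_im_def
  by (metis zero_complex.sel(2) of_real_0)
lemma inM_sum: "(\<And>j. j < n \<Longrightarrow> inM M (f j)) \<Longrightarrow> inM M (lc_sum n f)"
  unfolding inM_def lc_sum_def
proof (intro allI impI)
  fix q assume h: "\<And>j. j < n \<Longrightarrow> \<forall>q. f j q \<noteq> 0 \<longrightarrow> q \<in> M" and "(\<Sum>j<n. f j q) \<noteq> 0"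
  then obtain j where "j < n" "f j q \<noteq> 0" by (meson lessThan_iff sum.not_neutral_contains_not_neutral)
  then show "q \<in> M" using h by blast
qed

definition rank :: "rat set \<Rightarrow> rat \<Rightarrow> nat" where
  "rank M q = card {p\<in>M. p < q}"

lemma rank_less: assumes "good M" "p \<in> M" "p < q" shows "rank M p < rank M q"
  unfolding rank_def
proof (rule psubset_card_mono)
  show "finite {p\<in>M. p < q}" using good_fin[OF assms(1)] .
  show "{pa \<in> M. pa < p} \<subset> {p \<in> M. p < q}" using assms(2,3) by auto
qed

lemma M_induct:
  assumes M: "good M" and step: "\<And>q. q \<in> M \<Longrightarrow> (\<And>p. p \<in> M \<Longrightarrow> p < q \<Longrightarrow> P p) \<Longrightarrow> P q"
    and q: "q \<in> M"
  shows "P q"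
proof -
  have "q \<in> M \<longrightarrow> P q"
  proof (induction q rule: measure_induct_rule[where f="rank M"])
    case (less q)
    show ?case
    proof
      assume "q \<in> M"
      then show "P q"
      proof (rule step)
        fix p assume "p \<in> M" "p < q"
        then show "P p" using less rank_less[OF M] by blast
      qed
    qed
  qed
  then show ?thesis using q by blast
qed

primrec mrec :: "rat set \<Rightarrow> ((rat \<Rightarrow> complex) \<Rightarrow> rat \<Rightarrow> complex) \<Rightarrow> nat \<Rightarrow> rat \<Rightarrow> complex" where
  "mrec M F 0 = (\<lambda>q. 0)"
| "mrec M F (Suc N) = (\<lambda>q. if q \<in> M then F (mrec M F N) q else 0)"

definition mfix :: "rat set \<Rightarrow> ((rat \<Rightarrow> complex) \<Rightarrow> rat \<Rightarrow> complex) \<Rightarrow> rat \<Rightarrow> complex" where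
  "mfix M F = (\<lambda>q. mrec M F (Suc (rank M q)) q)"

definition causal :: "rat set \<Rightarrow> ((rat \<Rightarrow> complex) \<Rightarrow> rat \<Rightarrow> complex) \<Rightarrow> bool" where
  "causal M F \<longleftrightarrow> (\<forall>h h' q. q \<in> M \<longrightarrow> (\<forall>p\<in>M. p < q \<longrightarrow> h p = h' p) \<longrightarrow> F h q = F h' q)"

lemma mfix_key:
  assumes M: "good M" and C: "causal M F" and q: "q \<in> M"
  shows "\<forall>N. rank M q < N \<longrightarrow> mrec M F N q = F (mfix M F) q"
proof (rule M_induct[OF M, where P="\<lambda>q. \<forall>N. rank M q < N \<longrightarrow> mrec M F N q = F (mfix M F) q", OF _ q])
  fix q assume q1: "q \<in> M" and IH0: "\<And>p. p \<in> M \<Longrightarrow> p < q \<Longrightarrow> \<forall>N. rank M p < N \<longrightarrow> mrec M F N p = F (mfix M F) p"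
  have IH: "\<And>p N. p \<in> M \<Longrightarrow> p < q \<Longrightarrow> rank M p < N \<Longrightarrow> mrec M F N p = F (mfix M F) p"
    using IH0 by blast
  have mf: "\<And>p. p \<in> M \<Longrightarrow> p < q \<Longrightarrow> mfix M F p = F (mfix M F) p"
  proof -
    fix p assume p: "p \<in> M" "p < q"
    have "mfix M F p = mrec M F (Suc (rank M p)) p" by (simp only: mfix_def)
    also have "\<dots> = F (mfix M F) p" using IH[OF p lessI] .
    finally show "mfix M F p = F (mfix M F) p" .
  qed
  show "\<forall>N. rank M q < N \<longrightarrow> mrec M F N q = F (mfix M F) q"
  proof (intro allI impI)
    fix N assume N: "rank M q < N"
    then obtain N' where N': "N = Suc N'" "rank M q \<le> N'" by (cases N) auto
    have "mrec M F N q = F (mrec M F N') q" using N'(1) q1 by simp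
    also have "\<dots> = F (mfix M F) q"
    proof -
      have "\<forall>p\<in>M. p < q \<longrightarrow> mrec M F N' p = mfix M F p"
      proof (intro ballI impI)
        fix p assume p: "p \<in> M" "p < q"
        then have "rank M p < N'" using rank_less[OF M p] N'(2) by linarith
        then show "mrec M F N' p = mfix M F p" using IH[OF p] mf[OF p] by metis
      qed
      then show ?thesis using C q1 unfolding causal_def by blast
    qed
    finally show "mrec M F N q = F (mfix M F) q" .
  qed
qed

lemma mfix_eq:
  assumes M: "good M" and C: "causal M F"
  shows "mfix M F q = (if q \<in> M then F (mfix M F) q else 0)"
proof (cases "q \<in> M")
  case True
  have "mfix M F q = mrec M F (Suc (rank M q)) q" by (simp only: mfix_def)
  also have "\<dots> = F (mfix M F) q" using mfix_key[OF M C True] by blast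
  finally show ?thesis using True by simp
next
  case False
  then show ?thesis unfolding mfix_def by simp
qed


lemma inv_M:
  assumes M: "good M" and a: "inM M a" and a0: "a 0 \<noteq> 0"
  shows "\<exists>b. inM M b \<and> lc_mult a b = lc_one"
proof -
  define F where "F = (\<lambda>h q. if q = 0 then 1 / a 0 else
     - (\<Sum>p\<in>{p\<in>M. 0 < p \<and> p \<le> q}. a p * (if q - p \<in> M then h (q - p) else 0)) / a 0)"
  have C: "causal M F"
    unfolding causal_def
  proof (intro allI impI)
    fix h h' :: "rat \<Rightarrow> complex" and q assume q: "q \<in> M" and ag: "\<forall>p\<in>M. p < q \<longrightarrow> h p = h' p"
    have "(\<Sum>p\<in>{p\<in>M. 0 < p \<and> p \<le> q}. a p * (if q - p \<in> M then h (q - p) else 0))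
        = (\<Sum>p\<in>{p\<in>M. 0 < p \<and> p \<le> q}. a p * (if q - p \<in> M then h' (q - p) else 0))"
    proof (rule sum.cong[OF refl])
      fix p assume "p \<in> {p\<in>M. 0 < p \<and> p \<le> q}"
      then have "q - p < q" by simp
      then show "a p * (if q - p \<in> M then h (q - p) else 0) = a p * (if q - p \<in> M then h' (q - p) else 0)"
        using ag by auto
    qed
    then show "F h q = F h' q" unfolding F_def by simp
  qed
  define b where "b = mfix M F"
  have beq: "\<And>q. b q = (if q \<in> M then F b q else 0)" unfolding b_def using mfix_eq[OF M C] by blast
  have bM: "inM M b" unfolding inM_def
  proof (intro allI impI)
    fix q assume "b q \<noteq> 0"
    then show "q \<in> M" using beq[of q] by (cases "q \<in> M") auto
  qed
  have "lc_mult a b = lc_one"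
  proof
    fix q
    have form: "lc_mult a b q = (\<Sum>p\<in>{p\<in>M. p \<le> q}. a p * b (q - p))" using lc_mult_M[OF M a bM] .
    show "lc_mult a b q = lc_one q"
    proof (cases "q \<in> M")
      case False
      have "q \<noteq> 0" using False good_0[OF M] by auto
      have "(\<Sum>p\<in>{p\<in>M. p \<le> q}. a p * b (q - p)) = 0"
      proof (rule sum.neutral, rule ballI)
        fix p assume p: "p \<in> {p\<in>M. p \<le> q}"
        have "b (q - p) = 0"
        proof (rule ccontr)
          assume "b (q - p) \<noteq> 0"
          then have "q - p \<in> M" using bM unfolding inM_def by blast
          then have "p + (q - p) \<in> M" using good_add[OF M] p by blast
          then show False using False by simp
        qed
        then show "a p * b (q - p) = 0" by simp
      qed
      then show ?thesis using form \<open>q \<noteq> 0\<close> by (simp add: lc_one_def)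
    next
      case True
      show ?thesis
      proof (cases "q = 0")
        case True
        have "{p\<in>M. p \<le> q} = {0}"
        proof (rule set_eqI)
          fix p show "p \<in> {p\<in>M. p \<le> q} \<longleftrightarrow> p \<in> {0}" using True good_0[OF M] good_nonneg[OF M, of p] by auto
        qed
        then have "lc_mult a b q = a 0 * b 0" using form True by simp
        also have "b 0 = 1 / a 0" using beq[of 0] good_0[OF M] unfolding F_def by simp
        finally show ?thesis using a0 True by (simp add: lc_one_def)
      next
        case False
        let ?R = "{p\<in>M. 0 < p \<and> p \<le> q}"
        have split: "{p\<in>M. p \<le> q} = insert 0 ?R"
        proof (rule set_eqI)
          fix p show "p \<in> {p\<in>M. p \<le> q} \<longleftrightarrow> p \<in> insert 0 ?R"
            using good_0[OF M] good_nonneg[OF M, of p] True False good_nonneg[OF M, of q] by auto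
        qed
        have finR: "finite ?R"
        proof -
          have "?R \<subseteq> {p\<in>M. p \<le> q}" by auto
          then show ?thesis using good_fin_le[OF M] finite_subset by blast
        qed
        have "lc_mult a b q = a 0 * b q + (\<Sum>p\<in>?R. a p * b (q - p))"
          using form split finR by simp
        also have "(\<Sum>p\<in>?R. a p * b (q - p)) = (\<Sum>p\<in>?R. a p * (if q - p \<in> M then b (q - p) else 0))"
          by (rule sum.cong[OF refl]) (auto simp: inM_notin[OF bM])
        also have "b q = - (\<Sum>p\<in>?R. a p * (if q - p \<in> M then b (q - p) else 0)) / a 0"
          using beq[of q] \<open>q \<in> M\<close> False unfolding F_def by simp
        finally have "lc_mult a b q = 0" using a0 by simp
        then show ?thesis using False by (simp add: lc_one_def)
      qed
    qed
  qed
  then show ?thesis using bM by blast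
qed

lemma sqrt_M:
  assumes M: "good M" and t: "inM M t" and treal: "\<forall>q. t q \<in> \<real>" and t0: "Re (t 0) > 0"
  shows "\<exists>s. inM M s \<and> lc_mult s s = t \<and> (\<forall>q. s q \<in> \<real>) \<and> Re (s 0) > 0"
proof -
  define c where "c = complex_of_real (sqrt (Re (t 0)))"
  have c0: "c \<noteq> 0" using t0 unfolding c_def by simp
  have cc: "c * c = t 0"
  proof -
    have "t 0 = complex_of_real (Re (t 0))" using treal by (metis Reals_cases Re_complex_of_real)
    moreover have "sqrt (Re (t 0)) * sqrt (Re (t 0)) = Re (t 0)" using t0 by simp
    ultimately show ?thesis unfolding c_def by (metis of_real_mult)
  qed
  define F where "F = (\<lambda>h q. if q = 0 then c else
     (t q - (\<Sum>p\<in>{p\<in>M. 0 < p \<and> p < q}. h p * (if q - p \<in> M then h (q - p) else 0))) / (2 * c))"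
  have C: "causal M F"
    unfolding causal_def
  proof (intro allI impI)
    fix h h' :: "rat \<Rightarrow> complex" and q assume q: "q \<in> M" and ag: "\<forall>p\<in>M. p < q \<longrightarrow> h p = h' p"
    have "(\<Sum>p\<in>{p\<in>M. 0 < p \<and> p < q}. h p * (if q - p \<in> M then h (q - p) else 0))
        = (\<Sum>p\<in>{p\<in>M. 0 < p \<and> p < q}. h' p * (if q - p \<in> M then h' (q - p) else 0))"
    proof (rule sum.cong[OF refl])
      fix p assume p: "p \<in> {p\<in>M. 0 < p \<and> p < q}"
      then have "q - p < q" by simp
      then show "h p * (if q - p \<in> M then h (q - p) else 0) = h' p * (if q - p \<in> M then h' (q - p) else 0)"
        using ag p by auto
    qed
    then show "F h q = F h' q" unfolding F_def by simp
  qed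
  define s where "s = mfix M F"
  have seq: "\<And>q. s q = (if q \<in> M then F s q else 0)" unfolding s_def using mfix_eq[OF M C] by blast
  have sM: "inM M s" unfolding inM_def
  proof (intro allI impI)
    fix q assume "s q \<noteq> 0"
    then show "q \<in> M" using seq[of q] by (cases "q \<in> M") auto
  qed
  have s0: "s 0 = c" using seq[of 0] good_0[OF M] unfolding F_def by simp
  have "lc_mult s s = t"
  proof
    fix q
    have form: "lc_mult s s q = (\<Sum>p\<in>{p\<in>M. p \<le> q}. s p * s (q - p))" using lc_mult_M[OF M sM sM] .
    show "lc_mult s s q = t q"
    proof (cases "q \<in> M")
      case False
      have "(\<Sum>p\<in>{p\<in>M. p \<le> q}. s p * s (q - p)) = 0"
      proof (rule sum.neutral, rule ballI)
        fix p assume p: "p \<in> {p\<in>M. p \<le> q}"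
        have "s (q - p) = 0"
        proof (rule ccontr)
          assume "s (q - p) \<noteq> 0"
          then have "q - p \<in> M" using sM unfolding inM_def by blast
          then have "p + (q - p) \<in> M" using good_add[OF M] p by blast
          then show False using False by simp
        qed
        then show "s p * s (q - p) = 0" by simp
      qed
      moreover have "t q = 0" using t False unfolding inM_def by blast
      ultimately show ?thesis using form by simp
    next
      case True
      show ?thesis
      proof (cases "q = 0")
        case True
        have "{p\<in>M. p \<le> q} = {0}"
        proof (rule set_eqI)
          fix p show "p \<in> {p\<in>M. p \<le> q} \<longleftrightarrow> p \<in> {0}" using True good_0[OF M] good_nonneg[OF M, of p] by auto
        qed
        then have "lc_mult s s q = s 0 * s 0" using form True by simp
        then show ?thesis using s0 cc True by simp
      next
        case False
        let ?R = "{p\<in>M. 0 < p \<and> p < q}"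
        have qpos: "0 < q" using good_nonneg[OF M True] False by simp
        have split: "{p\<in>M. p \<le> q} = insert 0 (insert q ?R)"
        proof (rule set_eqI)
          fix p show "p \<in> {p\<in>M. p \<le> q} \<longleftrightarrow> p \<in> insert 0 (insert q ?R)"
            using good_0[OF M] good_nonneg[OF M, of p] True qpos by auto
        qed
        have finR: "finite ?R"
        proof -
          have "?R \<subseteq> {p\<in>M. p \<le> q}" by auto
          then show ?thesis using good_fin_le[OF M] finite_subset by blast
        qed
        have "lc_mult s s q = s 0 * s q + (s q * s 0 + (\<Sum>p\<in>?R. s p * s (q - p)))"
          using form split finR qpos by simp
        also have "(\<Sum>p\<in>?R. s p * s (q - p)) = (\<Sum>p\<in>?R. s p * (if q - p \<in> M then s (q - p) else 0))"
          by (rule sum.cong[OF refl]) (auto simp: inM_notin[OF sM])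
        also have "s q = (t q - (\<Sum>p\<in>?R. s p * (if q - p \<in> M then s (q - p) else 0))) / (2 * c)"
          using seq[of q] \<open>q \<in> M\<close> False unfolding F_def by simp
        finally show "lc_mult s s q = t q" using c0 s0 by (simp add: field_simps)
      qed
    qed
  qed
  moreover have "\<forall>q. s q \<in> \<real>"
  proof
    fix q
    show "s q \<in> \<real>"
    proof (cases "q \<in> M")
      case False
      then show ?thesis using seq[of q] by simp
    next
      case True
      show ?thesis
      proof (rule M_induct[OF M, where P="\<lambda>q. s q \<in> \<real>", OF _ True])
        fix q assume q: "q \<in> M" and IH: "\<And>p. p \<in> M \<Longrightarrow> p < q \<Longrightarrow> s p \<in> \<real>"
        have cR: "c \<in> \<real>" unfolding c_def by simp
        have "(\<Sum>p\<in>{p\<in>M. 0 < p \<and> p < q}. s p * (if q - p \<in> M then s (q - p) else 0)) \<in> \<real>"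
        proof (rule sum_in_Reals)
          fix p assume p: "p \<in> {p\<in>M. 0 < p \<and> p < q}"
          then have "s p \<in> \<real>" using IH by blast
          moreover have "(if q - p \<in> M then s (q - p) else 0) \<in> \<real>" using IH p by auto
          ultimately show "s p * (if q - p \<in> M then s (q - p) else 0) \<in> \<real>" by simp
        qed
        then show "s q \<in> \<real>" using seq[of q] q cR treal unfolding F_def by simp
      qed
    qed
  qed
  moreover have "Re (s 0) > 0" using s0 t0 unfolding c_def by simp
  ultimately show ?thesis using sM by blast
qed


inductive_set gen :: "rat set \<Rightarrow> rat set" for S where
  gen0: "0 \<in> gen S"
| genS: "p \<in> gen S \<Longrightarrow> s \<in> S \<Longrightarrow> p + s \<in> gen S"

lemma gen_add: "q \<in> gen S \<Longrightarrow> p \<in> gen S \<Longrightarrow> p + q \<in> gen S"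
proof (induction q rule: gen.induct)
  case gen0
  then show ?case by simp
next
  case (genS q s)
  then have "p + q + s \<in> gen S" using gen.genS by blast
  then show ?case by (simp add: add.assoc)
qed

lemma gen_sub: "s \<in> S \<Longrightarrow> s \<in> gen S"
  using gen.genS[OF gen.gen0] by simp

lemma gen_nonneg: assumes nn: "\<forall>s\<in>S. 0 \<le> s" and p: "p \<in> gen S" shows "0 \<le> p"
  using p by (induction p rule: gen.induct) (auto simp: nn)

lemma gen_list: assumes nn: "\<forall>s\<in>S. 0 \<le> s" and p: "p \<in> gen S"
  shows "\<exists>xs. set xs \<subseteq> {s\<in>S. 0 < s} \<and> sum_list xs = p"
  using p
proof (induction p rule: gen.induct)
  case gen0
  then show ?case by (rule exI[of _ "[]"]) simp
next
  case (genS p s)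
  then obtain xs where xs: "set xs \<subseteq> {s\<in>S. 0 < s}" "sum_list xs = p" by blast
  show ?case
  proof (cases "s = 0")
    case True
    then show ?thesis using xs by auto
  next
    case False
    then have "0 < s" using genS nn by force
    then show ?thesis using xs genS by (intro exI[of _ "s # xs"]) auto
  qed
qed

lemma sum_list_ge_len: "\<forall>x\<in>set xs. (m::rat) \<le> x \<Longrightarrow> of_nat (length xs) * m \<le> sum_list xs"
  by (induction xs) (auto simp: algebra_simps)

lemma elem_le_sum_list': "\<forall>x\<in>set xs. (0::rat) \<le> x \<Longrightarrow> y \<in> set xs \<Longrightarrow> y \<le> sum_list xs"
proof (induction xs)
  case Nil
  then show ?case by simp
next
  case (Cons a xs)
  have "0 \<le> sum_list xs" using Cons.prems(1) by (simp add: sum_list_nonneg)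
  then show ?case using Cons by auto
qed

lemma good_gen:
  assumes nn: "\<forall>s\<in>S. 0 \<le> s" and lf: "\<forall>r. finite {s\<in>S. s < r}"
  shows "good (gen S)"
  unfolding good_def
proof (intro conjI ballI allI)
  show "0 \<in> gen S" by (rule gen.gen0)
  show "\<And>p q. p \<in> gen S \<Longrightarrow> q \<in> gen S \<Longrightarrow> p + q \<in> gen S" using gen_add by blast
  show "\<And>p. p \<in> gen S \<Longrightarrow> 0 \<le> p" using gen_nonneg[OF nn] by blast
  fix r
  show "finite {p \<in> gen S. p < r}"
  proof (cases "{s\<in>S. 0 < s} = {}")
    case True
    have "{p \<in> gen S. p < r} \<subseteq> {0}"
    proof
      fix p assume "p \<in> {p \<in> gen S. p < r}"
      then obtain xs where "set xs \<subseteq> {s\<in>S. 0 < s}" "sum_list xs = p" using gen_list[OF nn] by blast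
      then show "p \<in> {0}" using True by auto
    qed
    then show ?thesis using finite_subset by blast
  next
    case False
    then obtain s0 where s0: "s0 \<in> S" "0 < s0" by blast
    let ?F = "{s\<in>S. 0 < s \<and> s < s0 + 1}"
    have finF: "finite ?F" using lf[rule_format, of "s0 + 1"] by (rule finite_subset[rotated]) auto
    have s0F: "s0 \<in> ?F" using s0 by simp
    define m where "m = Min ?F"
    have mF: "m \<in> ?F" unfolding m_def using finF s0F Min_in by blast
    then have m0: "0 < m" by simp
    have mle: "\<And>s. s \<in> S \<Longrightarrow> 0 < s \<Longrightarrow> m \<le> s"
    proof -
      fix s assume s: "s \<in> S" "0 < s"
      show "m \<le> s"
      proof (cases "s < s0 + 1")
        case True
        then have "s \<in> ?F" using s by simp
        then show ?thesis unfolding m_def using finF Min_le by blast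
      next
        case False
        have "m \<le> s0" unfolding m_def using finF s0F Min_le by blast
        then show ?thesis using False by simp
      qed
    qed
    define K where "K = nat \<lceil>r / m\<rceil>"
    have "{p \<in> gen S. p < r} \<subseteq> sum_list ` {xs. set xs \<subseteq> {s\<in>S. s < r} \<and> length xs \<le> K}"
    proof
      fix p assume p: "p \<in> {p \<in> gen S. p < r}"
      then obtain xs where xs: "set xs \<subseteq> {s\<in>S. 0 < s}" "sum_list xs = p" using gen_list[OF nn] by blast
      have nnx: "\<forall>x\<in>set xs. 0 \<le> x" using xs(1) by auto
      have "set xs \<subseteq> {s\<in>S. s < r}"
      proof
        fix x assume "x \<in> set xs"
        then have "x \<le> p" using elem_le_sum_list'[OF nnx] xs(2) by blast
        then show "x \<in> {s\<in>S. s < r}" using p \<open>x \<in> set xs\<close> xs(1) by auto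
      qed
      moreover have "length xs \<le> K"
      proof -
        have "\<forall>x\<in>set xs. m \<le> x" using xs(1) mle by auto
        then have "of_nat (length xs) * m \<le> p" using sum_list_ge_len xs(2) by blast
        then have "of_nat (length xs) * m < r" using p by simp
        then have "of_nat (length xs) < r / m" using m0 by (simp add: pos_less_divide_eq)
        then have "of_nat (length xs) < (of_int \<lceil>r / m\<rceil> :: rat)" using le_of_int_ceiling[of "r/m"] by linarith
        then have "int (length xs) < \<lceil>r / m\<rceil>" by (metis of_int_less_iff of_int_of_nat_eq)
        then show ?thesis unfolding K_def by linarith
      qed
      ultimately show "p \<in> sum_list ` {xs. set xs \<subseteq> {s\<in>S. s < r} \<and> length xs \<le> K}" using xs(2) by blast
    qed
    moreover have "finite (sum_list ` {xs. set xs \<subseteq> {s\<in>S. s < r} \<and> length xs \<le> K})"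
      using finite_lists_length_le[OF lf[rule_format, of r]] by blast
    ultimately show ?thesis using finite_subset by blast
  qed
qed

definition shift :: "rat \<Rightarrow> lc \<Rightarrow> lc" where
  "shift a u = (\<lambda>q. u (q - a))"

lemma shift_mult: "lc_mult (shift a u) (shift b v) q = lc_mult u v (q - a - b)"
  unfolding lc_mult_def shift_def
  by (rule sum.reindex_bij_witness[where i="\<lambda>(x, y). (x + a, y + b)" and j="\<lambda>(x, y). (x - a, y - b)"])
     (auto simp: algebra_simps)

lemma lf_shift: assumes "left_finite u" shows "left_finite (shift a u)"
  unfolding left_finite_def
proof
  fix r
  have "{q. q < r \<and> shift a u q \<noteq> 0} = (\<lambda>x. x + a) ` {x. x < r - a \<and> u x \<noteq> 0}"
  proof (rule set_eqI)
    fix q show "q \<in> {q. q < r \<and> shift a u q \<noteq> 0} \<longleftrightarrow> q \<in> (\<lambda>x. x + a) ` {x. x < r - a \<and> u x \<noteq> 0}"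
      unfolding shift_def by (auto intro: image_eqI[where x="q - a"])
  qed
  moreover have "finite {x. x < r - a \<and> u x \<noteq> 0}" using assms unfolding left_finite_def by blast
  ultimately show "finite {q. q < r \<and> shift a u q \<noteq> 0}" by simp
qed

definition is_sqrt :: "lc \<Rightarrow> lc \<Rightarrow> bool" where
  "is_sqrt t s \<longleftrightarrow> left_finite s \<and> lc_real s \<and> lc_nonneg s \<and> lc_mult s s = t"

lemma nonneg_neg:
  assumes "lc_nonneg s" "lc_nonneg (\<lambda>q. - s q)"
  shows "s = lc_zero"
proof (rule ccontr)
  assume ne: "s \<noteq> lc_zero"
  then have "\<exists>q. s q \<noteq> 0" by (auto simp: lc_zero_def)
  have "(\<lambda>q. - s q) \<noteq> lc_zero" using ne by (auto simp: lc_zero_def fun_eq_iff)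
  then have p1: "lc_pos s" and p2: "lc_pos (\<lambda>q. - s q)" using assms ne unfolding lc_nonneg_def by auto
  obtain q where q: "s q \<noteq> 0" "\<forall>p<q. s p = 0" "Re (s q) > 0" using p1 unfolding lc_pos_def by blast
  obtain q' where q': "- s q' \<noteq> 0" "\<forall>p<q'. - s p = 0" "Re (- s q') > 0" using p2 unfolding lc_pos_def by blast
  have "q = q'"
  proof (rule ccontr)
    assume "q \<noteq> q'"
    then have "q < q' \<or> q' < q" by linarith
    then show False using q q' by auto
  qed
  then show False using q(3) q'(3) by simp
qed

lemma sqrt_unique:
  assumes s: "is_sqrt t s" and s': "is_sqrt t s'"
  shows "s = s'"
proof -
  have ls: "left_finite s" and ls': "left_finite s'" using s s' unfolding is_sqrt_def by auto
  define S where "S = Abs_lf s"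
  define S' where "S' = Abs_lf s'"
  have RS: "Rep_lf S = s" unfolding S_def using ls by (simp add: Abs_lf_inverse)
  have RS': "Rep_lf S' = s'" unfolding S'_def using ls' by (simp add: Abs_lf_inverse)
  have "Rep_lf (S * S) = Rep_lf (S' * S')" using s s' unfolding is_sqrt_def by (simp add: times_lf.rep_eq RS RS')
  then have "S * S = S' * S'" using Rep_lf_inject by blast
  then have "S = S' \<or> S = - S'" by (simp add: square_eq_iff)
  then show ?thesis
  proof
    assume "S = S'"
    then show ?thesis using RS RS' by simp
  next
    assume h: "S = - S'"
    then have "s = (\<lambda>q. - s' q)" using RS RS' by (simp add: uminus_lf.rep_eq)
    then have "s' = lc_zero" using nonneg_neg[of s'] s s' unfolding is_sqrt_def by simp
    moreover then have "s = lc_zero" using \<open>s = (\<lambda>q. - s' q)\<close> by (simp add: lc_zero_def)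
    ultimately show ?thesis by simp
  qed
qed

lemma lc_sqrt_eq: assumes "is_sqrt t s" shows "lc_sqrt t = s"
  unfolding lc_sqrt_def
proof (rule the_equality)
  show "left_finite s \<and> lc_real s \<and> lc_nonneg s \<and> lc_mult s s = t" using assms unfolding is_sqrt_def .
  fix s' assume "left_finite s' \<and> lc_real s' \<and> lc_nonneg s' \<and> lc_mult s' s' = t"
  then have "is_sqrt t s'" unfolding is_sqrt_def .
  then show "s' = s" using sqrt_unique assms by blast
qed

lemma lc_inv_eq:
  assumes a: "left_finite a" and b: "left_finite b" and ab: "lc_mult a b = lc_one"
  shows "lc_inv a = b"
  unfolding lc_inv_def
proof (rule the_equality)
  show "left_finite b \<and> lc_mult a b = lc_one" using b ab by simp
  fix b' assume h: "left_finite b' \<and> lc_mult a b' = lc_one"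
  define A where "A = Abs_lf a"
  define B where "B = Abs_lf b"
  define B' where "B' = Abs_lf b'"
  have RA: "Rep_lf A = a" unfolding A_def using a by (simp add: Abs_lf_inverse)
  have RB: "Rep_lf B = b" unfolding B_def using b by (simp add: Abs_lf_inverse)
  have RB': "Rep_lf B' = b'" unfolding B'_def using h by (simp add: Abs_lf_inverse)
  have AB: "A * B = 1" using ab by (metis Rep_lf_inject times_lf.rep_eq one_lf.rep_eq RA RB)
  have AB': "A * B' = 1" using h by (metis Rep_lf_inject times_lf.rep_eq one_lf.rep_eq RA RB')
  have "B' = B' * (A * B)" using AB by simp
  also have "\<dots> = (A * B') * B" by (simp add: ac_simps)
  also have "\<dots> = B" using AB' by simp
  finally show "b' = b" using RB RB' by metis
qed

lemma real_mult: "lc_real a \<Longrightarrow> lc_real b \<Longrightarrow> lc_real (lc_mult a b)"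
  unfolding lc_real_def lc_mult_def
proof
  fix q assume a: "\<forall>q. Im (a q) = 0" and b: "\<forall>q. Im (b q) = 0"
  have "\<And>x. (case x of (q1, q2) \<Rightarrow> a q1 * b q2) \<in> \<real>"
    using a b by (auto simp: complex_is_Real_iff split: prod.splits)
  then have "(\<Sum>(q1, q2)\<in>{(q1, q2). q1 + q2 = q \<and> a q1 \<noteq> 0 \<and> b q2 \<noteq> 0}. a q1 * b q2) \<in> \<real>"
    by (intro sum_in_Reals) blast
  then show "Im (\<Sum>(q1, q2)\<in>{(q1, q2). q1 + q2 = q \<and> a q1 \<noteq> 0 \<and> b q2 \<noteq> 0}. a q1 * b q2) = 0"
    by (simp add: complex_is_Real_iff)
qed

lemma pos_mult:
  assumes "lc_real a" "lc_real b" "lc_pos a" "lc_pos b"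
  shows "lc_pos (lc_mult a b)"
proof -
  obtain qa where qa: "a qa \<noteq> 0" "\<forall>p<qa. a p = 0" "Re (a qa) > 0" using assms(3) unfolding lc_pos_def by blast
  obtain qb where qb: "b qb \<noteq> 0" "\<forall>p<qb. b p = 0" "Re (b qb) > 0" using assms(4) unfolding lc_pos_def by blast
  have e: "lc_mult a b (qa + qb) = a qa * b qb" using lead_mult qa(2) qb(2) by blast
  have "Im (a qa) = 0" "Im (b qb) = 0" using assms(1,2) unfolding lc_real_def by auto
  then have "Re (a qa * b qb) = Re (a qa) * Re (b qb)" by simp
  then have "Re (lc_mult a b (qa + qb)) > 0" using e qa(3) qb(3) by (simp only:) simp
  moreover have "\<forall>p<qa + qb. lc_mult a b p = 0" using lb_mult[OF qa(2) qb(2)] by blast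
  ultimately show ?thesis unfolding lc_pos_def by (metis zero_complex.sel(1) less_irrefl)
qed


lemma lf_re: "left_finite a \<Longrightarrow> left_finite (lc_re a)"
  unfolding left_finite_def
proof
  fix r assume "\<forall>r. finite {q. q < r \<and> a q \<noteq> 0}"
  moreover have "{q. q < r \<and> lc_re a q \<noteq> 0} \<subseteq> {q. q < r \<and> a q \<noteq> 0}"
    unfolding lc_re_def by (auto)
  ultimately show "finite {q. q < r \<and> lc_re a q \<noteq> 0}" using finite_subset by blast
qed

lemma lf_im: "left_finite a \<Longrightarrow> left_finite (lc_im a)"
  unfolding left_finite_def
proof
  fix r assume "\<forall>r. finite {q. q < r \<and> a q \<noteq> 0}"
  moreover have "{q. q < r \<and> lc_im a q \<noteq> 0} \<subseteq> {q. q < r \<and> a q \<noteq> 0}"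
    unfolding lc_im_def by (auto)
  ultimately show "finite {q. q < r \<and> lc_im a q \<noteq> 0}" using finite_subset by blast
qed

lemma real_re: "lc_real (lc_re a)" unfolding lc_real_def lc_re_def by simp
lemma real_im: "lc_real (lc_im a)" unfolding lc_real_def lc_im_def by simp
lemma real_add: "lc_real a \<Longrightarrow> lc_real b \<Longrightarrow> lc_real (lc_add a b)" unfolding lc_real_def lc_add_def by simp

lemma sqrt_M_is:
  assumes M: "good M" and t: "inM M t" and treal: "\<forall>q. t q \<in> \<real>" and t0: "Re (t 0) > 0"
  shows "\<exists>s. inM M s \<and> is_sqrt t s \<and> Re (s 0) > 0 \<and> (\<forall>q. s q \<in> \<real>)"
proof -
  obtain s where s: "inM M s" "lc_mult s s = t" "\<forall>q. s q \<in> \<real>" "Re (s 0) > 0"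
    using sqrt_M[OF M t treal t0] by blast
  have "lc_pos s" unfolding lc_pos_def
    using s(4) inM_lb[OF M s(1)] by (intro exI[of _ 0]) auto
  then have "is_sqrt t s" unfolding is_sqrt_def lc_nonneg_def lc_real_def
    using inM_lf[OF M s(1)] s(2,3) by (simp add: complex_is_Real_iff)
  then show ?thesis using s by blast
qed

lemma sqrt_exists:
  assumes lf: "left_finite t" and re: "lc_real t" and nn: "lc_nonneg t"
  shows "\<exists>s. is_sqrt t s"
proof (cases "t = lc_zero")
  case True
  have "is_sqrt t lc_zero" unfolding is_sqrt_def
    using True lf_zero lc_mult_zero by (simp add: lc_real_def lc_zero_def lc_nonneg_def)
  then show ?thesis by blast
next
  case False
  then have "lc_pos t" using nn unfolding lc_nonneg_def by simp
  then obtain m where m: "t m \<noteq> 0" "\<forall>p<m. t p = 0" "Re (t m) > 0" unfolding lc_pos_def by blast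
  define t' where "t' = shift (- m) t"
  have t'q: "\<And>q. t' q = t (q + m)" unfolding t'_def shift_def by simp
  define S where "S = {q. t' q \<noteq> 0}"
  have Snn: "\<forall>s\<in>S. 0 \<le> s"
  proof
    fix s assume "s \<in> S"
    then have "t (s + m) \<noteq> 0" unfolding S_def t'q by simp
    then have "\<not> (s + m < m)" using m(2) by blast
    then show "0 \<le> s" by linarith
  qed
  have lft': "left_finite t'" unfolding t'_def using lf_shift[OF lf] .
  have Slf: "\<forall>r. finite {s\<in>S. s < r}"
  proof
    fix r
    have "{s\<in>S. s < r} = {q. q < r \<and> t' q \<noteq> 0}" unfolding S_def by auto
    then show "finite {s\<in>S. s < r}" using lft' unfolding left_finite_def by simp
  qed
  define M where "M = gen S"
  have M: "good M" unfolding M_def using good_gen[OF Snn Slf] .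
  have tM: "inM M t'" unfolding inM_def M_def
  proof (intro allI impI)
    fix q assume "t' q \<noteq> 0" then have "q \<in> S" unfolding S_def by simp
    then show "q \<in> gen S" by (rule gen_sub)
  qed
  have t'R: "\<forall>q. t' q \<in> \<real>" unfolding complex_is_Real_iff t'q using re unfolding lc_real_def by blast
  have t'0: "Re (t' 0) > 0" using m(3) t'q by simp
  obtain s' where s': "inM M s'" "is_sqrt t' s'" "Re (s' 0) > 0" "\<forall>q. s' q \<in> \<real>"
    using sqrt_M_is[OF M tM t'R t'0] by blast
  define s where "s = shift (m / 2) s'"
  have "lc_mult s s = t"
  proof
    fix q
    have "lc_mult s s q = lc_mult s' s' (q - m / 2 - m / 2)" unfolding s_def by (rule shift_mult)
    also have "\<dots> = t' (q - m)" using s'(2) unfolding is_sqrt_def by simp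
    also have "\<dots> = t q" using t'q by simp
    finally show "lc_mult s s q = t q" .
  qed
  moreover have "left_finite s" unfolding s_def using lf_shift s'(2) unfolding is_sqrt_def by blast
  moreover have "lc_real s" using s'(4) unfolding s_def shift_def lc_real_def complex_is_Real_iff by blast
  moreover have "lc_pos s"
    unfolding lc_pos_def
  proof (intro exI[of _ "m / 2"] conjI allI impI)
    have e: "s (m / 2) = s' 0" unfolding s_def shift_def by simp
    show "s (m / 2) \<noteq> 0" using s'(3) unfolding e by auto
    show "Re (s (m / 2)) > 0" using s'(3) unfolding e by auto
    fix p assume "p < m / 2"
    then have "p - m / 2 < 0" by simp
    then show "s p = 0" unfolding s_def shift_def using inM_lb[OF M s'(1)] by blast
  qed
  ultimately have "is_sqrt t s" unfolding is_sqrt_def lc_nonneg_def by blast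
  then show ?thesis by blast
qed

definition T1 :: "lc \<Rightarrow> lc" where
  "T1 z = lc_add (lc_mult (lc_re z) (lc_re z)) (lc_mult (lc_im z) (lc_im z))"

lemma pos_sumsq:
  assumes a: "left_finite a" "lc_real a" and b: "left_finite b" "lc_real b" and ne: "a q0 \<noteq> 0 \<or> b q0 \<noteq> 0"
  shows "lc_pos (lc_add (lc_mult a a) (lc_mult b b))"
proof -
  define h :: lc where "h = (\<lambda>q. if a q \<noteq> 0 \<or> b q \<noteq> 0 then 1 else 0)"
  have lh: "left_finite h" unfolding left_finite_def
  proof
    fix r
    have "{q. q < r \<and> h q \<noteq> 0} \<subseteq> {q. q < r \<and> a q \<noteq> 0} \<union> {q. q < r \<and> b q \<noteq> 0}" unfolding h_def by auto
    then show "finite {q. q < r \<and> h q \<noteq> 0}" using a(1) b(1) unfolding left_finite_def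
      using finite_subset by blast
  qed
  have "h q0 \<noteq> 0" using ne unfolding h_def by simp
  then obtain m where m: "h m \<noteq> 0" "\<forall>p<m. h p = 0" using lf_lead[OF lh] by blast
  have am: "\<forall>p<m. a p = 0" and bm: "\<forall>p<m. b p = 0" using m(2) unfolding h_def by (auto split: if_splits)
  have nm: "a m \<noteq> 0 \<or> b m \<noteq> 0" using m(1) unfolding h_def by (auto split: if_splits)
  have e: "lc_add (lc_mult a a) (lc_mult b b) (m + m) = a m * a m + b m * b m"
    unfolding lc_add_def using lead_mult[OF am am] lead_mult[OF bm bm] by simp
  have ia: "Im (a m) = 0" and ib: "Im (b m) = 0" using a(2) b(2) unfolding lc_real_def by auto
  have "Re (a m) \<noteq> 0 \<or> Re (b m) \<noteq> 0" using nm ia ib by (auto simp: complex_eq_iff)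
  then have pos: "Re (a m) * Re (a m) + Re (b m) * Re (b m) > 0"
  proof
    assume "Re (a m) \<noteq> 0"
    then have "Re (a m) * Re (a m) > 0" by (metis not_real_square_gt_zero)
    moreover have "Re (b m) * Re (b m) \<ge> 0" by simp
    ultimately show ?thesis by linarith
  next
    assume "Re (b m) \<noteq> 0"
    then have "Re (b m) * Re (b m) > 0" by (metis not_real_square_gt_zero)
    moreover have "Re (a m) * Re (a m) \<ge> 0" by simp
    ultimately show ?thesis by linarith
  qed
  have "Re (a m * a m + b m * b m) = Re (a m) * Re (a m) + Re (b m) * Re (b m)" using ia ib by simp
  then have rp: "Re (lc_add (lc_mult a a) (lc_mult b b) (m + m)) > 0" using e pos by simp
  have "\<forall>p<m + m. lc_add (lc_mult a a) (lc_mult b b) p = 0"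
    unfolding lc_add_def using lb_mult[OF am am] lb_mult[OF bm bm] by simp
  then show ?thesis unfolding lc_pos_def using rp by (intro exI[of _ "m + m"]) auto
qed

lemma T1_props:
  assumes "left_finite z"
  shows "left_finite (T1 z) \<and> lc_real (T1 z) \<and> lc_nonneg (T1 z)"
proof (intro conjI)
  show "left_finite (T1 z)" unfolding T1_def
    by (intro lf_add lf_mult lf_re lf_im assms)
  show "lc_real (T1 z)" unfolding T1_def
    by (intro real_add real_mult real_re real_im)
  show "lc_nonneg (T1 z)"
  proof (cases "\<exists>q. z q \<noteq> 0")
    case True
    then obtain q where "z q \<noteq> 0" by blast
    then have "lc_re z q \<noteq> 0 \<or> lc_im z q \<noteq> 0" unfolding lc_re_def lc_im_def
      by (auto simp: complex_eq_iff)
    then have "lc_pos (T1 z)" unfolding T1_def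
      by (rule pos_sumsq[OF lf_re[OF assms] real_re lf_im[OF assms] real_im])
    then show ?thesis unfolding lc_nonneg_def by blast
  next
    case False
    then have "lc_re z = lc_zero" "lc_im z = lc_zero" unfolding lc_re_def lc_im_def lc_zero_def by auto
    then have "T1 z = lc_zero" unfolding T1_def using lc_mult_zero by (simp add: lc_add_def lc_zero_def)
    then show ?thesis unfolding lc_nonneg_def by simp
  qed
qed

lemma cabs_is: "left_finite z \<Longrightarrow> is_sqrt (T1 z) (lc_cabs z)"
proof -
  assume z: "left_finite z"
  obtain s where s: "is_sqrt (T1 z) s" using sqrt_exists T1_props[OF z] by blast
  have "lc_cabs z = lc_sqrt (T1 z)" unfolding lc_cabs_def T1_def ..
  then show ?thesis using lc_sqrt_eq[OF s] s by simp
qed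

lemma lc_sum_cong: "(\<And>i. i < n \<Longrightarrow> f i = g i) \<Longrightarrow> lc_sum n f = lc_sum n g"
  unfolding lc_sum_def by (rule ext) (rule sum.cong, auto)

lemma norm2_eq:
  assumes "\<forall>i<n. left_finite (x i)"
  shows "lc_norm2 n x = lc_sqrt (lc_sum n (\<lambda>i. T1 (x i)))"
proof -
  have "lc_sum n (\<lambda>i. lc_mult (lc_cabs (x i)) (lc_cabs (x i))) = lc_sum n (\<lambda>i. T1 (x i))"
    by (rule lc_sum_cong) (use cabs_is assms in \<open>auto simp: is_sqrt_def\<close>)
  then show ?thesis unfolding lc_norm2_def by simp
qed


definition conv :: "(nat \<Rightarrow> lc) \<Rightarrow> lc \<Rightarrow> bool" where
  "conv s l \<longleftrightarrow> (\<forall>q. (\<lambda>k. s k q) \<longlonglongrightarrow> l q)"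

lemma prod_formula:
  assumes M: "good M" and a: "inM M a" and b: "inM M b" and q: "q \<in> M"
  shows "lc_mult a b q = a 0 * b q + (\<Sum>p\<in>{p\<in>M. 0 < p \<and> p \<le> q}. a p * b (q - p))"
proof -
  let ?R = "{p\<in>M. 0 < p \<and> p \<le> q}"
  have split: "{p\<in>M. p \<le> q} = insert 0 ?R"
  proof (rule set_eqI)
    fix p show "p \<in> {p\<in>M. p \<le> q} \<longleftrightarrow> p \<in> insert 0 ?R"
      using good_0[OF M] good_nonneg[OF M, of p] good_nonneg[OF M q] q by auto
  qed
  have finR: "finite ?R"
  proof -
    have "?R \<subseteq> {p\<in>M. p \<le> q}" by auto
    then show ?thesis using good_fin_le[OF M] finite_subset by blast
  qed
  show ?thesis using lc_mult_M[OF M a b, of q] split finR by simp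
qed

lemma sq_formula:
  assumes M: "good M" and s: "inM M s" and q: "q \<in> M" "0 < q"
  shows "lc_mult s s q = 2 * s 0 * s q + (\<Sum>p\<in>{p\<in>M. 0 < p \<and> p < q}. s p * s (q - p))"
proof -
  let ?R = "{p\<in>M. 0 < p \<and> p < q}"
  have split: "{p\<in>M. 0 < p \<and> p \<le> q} = insert q ?R"
    using q by auto
  have finR: "finite ?R"
  proof -
    have "?R \<subseteq> {p\<in>M. p \<le> q}" by auto
    then show ?thesis using good_fin_le[OF M] finite_subset by blast
  qed
  have "lc_mult s s q = s 0 * s q + (s q * s 0 + (\<Sum>p\<in>?R. s p * s (q - p)))"
    using prod_formula[OF M s s q(1)] split finR by simp
  then show ?thesis by (simp add: algebra_simps)
qed

lemma conv_mult:
  assumes M: "good M" and aM: "\<forall>k. inM M (a k)" and bM: "\<forall>k. inM M (b k)"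
    and ca: "conv a a0" and cb: "conv b b0" and a0M: "inM M a0" and b0M: "inM M b0"
  shows "conv (\<lambda>k. lc_mult (a k) (b k)) (lc_mult a0 b0)"
  unfolding conv_def
proof
  fix q
  have e: "\<And>k. lc_mult (a k) (b k) q = (\<Sum>p\<in>{p\<in>M. p \<le> q}. a k p * b k (q - p))"
    using lc_mult_M[OF M] aM bM by blast
  have "(\<lambda>k. \<Sum>p\<in>{p\<in>M. p \<le> q}. a k p * b k (q - p)) \<longlonglongrightarrow> (\<Sum>p\<in>{p\<in>M. p \<le> q}. a0 p * b0 (q - p))"
    using ca cb unfolding conv_def by (intro tendsto_sum tendsto_mult) auto
  then show "(\<lambda>k. lc_mult (a k) (b k) q) \<longlonglongrightarrow> lc_mult a0 b0 q"
    using e lc_mult_M[OF M a0M b0M, of q] by simp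
qed

lemma conv_add: "conv a a0 \<Longrightarrow> conv b b0 \<Longrightarrow> conv (\<lambda>k. lc_add (a k) (b k)) (lc_add a0 b0)"
  unfolding conv_def lc_add_def by (auto intro: tendsto_add)
lemma conv_sub: "conv a a0 \<Longrightarrow> conv b b0 \<Longrightarrow> conv (\<lambda>k. lc_sub (a k) (b k)) (lc_sub a0 b0)"
  unfolding conv_def lc_sub_def by (auto intro: tendsto_diff)
lemma conv_re: "conv a a0 \<Longrightarrow> conv (\<lambda>k. lc_re (a k)) (lc_re a0)"
  unfolding conv_def lc_re_def
proof (intro allI)
  fix q assume "\<forall>q. (\<lambda>k. a k q) \<longlonglongrightarrow> a0 q"
  then have "(\<lambda>k. a k q) \<longlonglongrightarrow> a0 q" by blast
  then have "(\<lambda>k. Re (a k q)) \<longlonglongrightarrow> Re (a0 q)" by (rule tendsto_Re)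
  then show "(\<lambda>k. complex_of_real (Re (a k q))) \<longlonglongrightarrow> complex_of_real (Re (a0 q))" by (rule tendsto_of_real)
qed
lemma conv_im: "conv a a0 \<Longrightarrow> conv (\<lambda>k. lc_im (a k)) (lc_im a0)"
  unfolding conv_def lc_im_def
proof (intro allI)
  fix q assume "\<forall>q. (\<lambda>k. a k q) \<longlonglongrightarrow> a0 q"
  then have "(\<lambda>k. a k q) \<longlonglongrightarrow> a0 q" by blast
  then have "(\<lambda>k. Im (a k q)) \<longlonglongrightarrow> Im (a0 q)" by (rule tendsto_Im)
  then show "(\<lambda>k. complex_of_real (Im (a k q))) \<longlonglongrightarrow> complex_of_real (Im (a0 q))" by (rule tendsto_of_real)
qed
lemma conv_const: "conv (\<lambda>k. a) a" unfolding conv_def by simp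
lemma conv_sum: "(\<And>j. j < n \<Longrightarrow> conv (\<lambda>k. f k j) (g j)) \<Longrightarrow> conv (\<lambda>k. lc_sum n (f k)) (lc_sum n g)"
  unfolding conv_def lc_sum_def by (auto intro!: tendsto_sum)

lemma rec_to_0:
  fixes u v :: "nat \<Rightarrow> complex"
  assumes rec: "\<And>k. u (Suc k) = c * u k + v k" and c: "norm c < 1" and v: "v \<longlonglongrightarrow> 0"
  shows "u \<longlonglongrightarrow> 0"
proof (rule LIMSEQ_I)
  fix e :: real assume e: "0 < e"
  define d where "d = e * (1 - norm c) / 2"
  have d: "0 < d" unfolding d_def using e c by simp
  from LIMSEQ_D[OF v d] obtain K where K0: "\<forall>k\<ge>K. norm (v k - 0) < d" by auto
  have K: "\<And>k. k \<ge> K \<Longrightarrow> norm (v k) < d" using K0 by simp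
  have bnd: "\<And>j. norm (u (K + j)) \<le> norm c ^ j * norm (u K) + d / (1 - norm c)"
  proof -
    fix j show "norm (u (K + j)) \<le> norm c ^ j * norm (u K) + d / (1 - norm c)"
    proof (induction j)
      case 0
      have "0 \<le> d / (1 - norm c)" using d c by simp
      then show ?case by simp
    next
      case (Suc j)
      have "norm (u (K + Suc j)) = norm (c * u (K + j) + v (K + j))" using rec by simp
      also have "\<dots> \<le> norm (c * u (K + j)) + norm (v (K + j))"
        by (rule norm_triangle_ineq)
      also have "\<dots> = norm c * norm (u (K + j)) + norm (v (K + j))"
        by (simp add: norm_mult)
      also have "\<dots> \<le> norm c * (norm c ^ j * norm (u K) + d / (1 - norm c)) + d"
        using Suc K[of "K + j"] by (intro add_mono mult_left_mono) auto
      also have "\<dots> = norm c ^ Suc j * norm (u K) + d / (1 - norm c)"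
        using c by (simp add: field_simps)
      finally show ?case .
    qed
  qed
  have "(\<lambda>j. norm c ^ j * norm (u K)) \<longlonglongrightarrow> 0"
    using c by (intro tendsto_mult_left_zero LIMSEQ_power_zero) auto
  from LIMSEQ_D[OF this, of "e/2"] e obtain J where J0: "\<forall>j\<ge>J. norm (norm c ^ j * norm (u K) - 0) < e / 2"
    by auto
  have J: "\<And>j. j \<ge> J \<Longrightarrow> norm (norm c ^ j * norm (u K)) < e / 2" using J0 by simp
  have dd: "d / (1 - norm c) = e / 2" unfolding d_def using c by (simp add: field_simps)
  show "\<exists>N. \<forall>n\<ge>N. norm (u n - 0) < e"
  proof (intro exI allI impI)
    fix n assume n: "n \<ge> K + J"
    define j where "j = n - K"
    have j: "n = K + j" "j \<ge> J" using n unfolding j_def by auto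
    have "norm (norm c ^ j * norm (u K)) < e / 2" using J j(2) by blast
    then have "norm c ^ j * norm (u K) < e / 2" by simp
    then show "norm (u n - 0) < e" using bnd[of j] j(1) dd by simp
  qed
qed


lemma pow_inM: "good M \<Longrightarrow> inM M (Rep_lf A) \<Longrightarrow> inM M (Rep_lf (A ^ k))"
proof (induction k)
  case 0
  then show ?case by (simp add: one_lf.rep_eq inM_one)
next
  case (Suc k)
  then show ?case by (simp add: times_lf.rep_eq inM_mult)
qed

lemma pow_conv0:
  assumes M: "good M" and aM: "inM M (Rep_lf A)" and c: "norm (Rep_lf A 0) < 1"
  shows "(\<lambda>k. Rep_lf (A ^ k) q) \<longlonglongrightarrow> 0"
proof (cases "q \<in> M")
  case False
  then show ?thesis using inM_notin[OF pow_inM[OF M aM]] by simp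
next
  case True
  let ?a = "Rep_lf A"
  show ?thesis
  proof (rule M_induct[OF M, where P="\<lambda>q. (\<lambda>k. Rep_lf (A ^ k) q) \<longlonglongrightarrow> 0", OF _ True])
    fix q assume q: "q \<in> M" and IH: "\<And>p. p \<in> M \<Longrightarrow> p < q \<Longrightarrow> (\<lambda>k. Rep_lf (A ^ k) p) \<longlonglongrightarrow> 0"
    let ?R = "{p\<in>M. 0 < p \<and> p \<le> q}"
    have rec: "\<And>k. Rep_lf (A ^ Suc k) q = ?a 0 * Rep_lf (A ^ k) q + (\<Sum>p\<in>?R. ?a p * Rep_lf (A ^ k) (q - p))"
      using prod_formula[OF M aM pow_inM[OF M aM] q] by (simp add: times_lf.rep_eq)
    have v: "(\<lambda>k. \<Sum>p\<in>?R. ?a p * Rep_lf (A ^ k) (q - p)) \<longlonglongrightarrow> 0"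
    proof -
      have "(\<lambda>k. \<Sum>p\<in>?R. ?a p * Rep_lf (A ^ k) (q - p)) \<longlonglongrightarrow> (\<Sum>p\<in>?R. ?a p * 0)"
      proof (intro tendsto_sum tendsto_mult tendsto_const)
        fix p assume p: "p \<in> ?R"
        show "(\<lambda>k. Rep_lf (A ^ k) (q - p)) \<longlonglongrightarrow> 0"
        proof (cases "q - p \<in> M")
          case True
          then show ?thesis using IH p by simp
        next
          case False
          then show ?thesis using inM_notin[OF pow_inM[OF M aM]] by simp
        qed
      qed
      then show ?thesis by simp
    qed
    show "(\<lambda>k. Rep_lf (A ^ k) q) \<longlonglongrightarrow> 0"
      by (rule rec_to_0[OF rec c v])
  qed
qed

lemma prod0:
  assumes M: "good M" and a: "inM M a" and b: "inM M b"
  shows "lc_mult a b 0 = a 0 * b 0"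
proof -
  have E: "{p\<in>M. 0 < p \<and> p \<le> (0::rat)} = {}" by auto
  have "lc_mult a b 0 = a 0 * b 0 + (\<Sum>p\<in>{p\<in>M. 0 < p \<and> p \<le> (0::rat)}. a p * b (0 - p))"
    by (rule prod_formula[OF M a b good_0[OF M]])
  then show ?thesis unfolding E by simp
qed

lemma real_pos_sqrt: "z \<in> \<real> \<Longrightarrow> Re z > 0 \<Longrightarrow> z = complex_of_real (sqrt (Re (z * z)))"
  by (metis Re_complex_of_real Reals_cases less_eq_real_def of_real_mult real_sqrt_abs2 abs_of_nonneg power2_eq_square)

lemma sqrt_conv:
  assumes M: "good M" and tk: "\<forall>k. inM M (t k)" and tL: "inM M tL" and ct: "conv t tL"
    and sk: "\<forall>k. inM M (s k)" and skk: "\<forall>k. lc_mult (s k) (s k) = t k"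
    and sk0: "\<forall>k. Re (s k 0) > 0 \<and> s k 0 \<in> \<real>"
    and sl: "inM M sl" and sll: "lc_mult sl sl = tL" and sl0: "Re (sl 0) > 0" "sl 0 \<in> \<real>"
  shows "conv s sl"
  unfolding conv_def
proof
  fix q
  have z0: "0 \<in> M" using good_0[OF M] .
  have tk0: "\<And>k. t k 0 = s k 0 * s k 0"
  proof -
    fix k show "t k 0 = s k 0 * s k 0" using prod0[OF M sk[rule_format, of k] sk[rule_format, of k]] skk by simp
  qed
  have tl0: "tL 0 = sl 0 * sl 0"
    using prod0[OF M sl sl] sll by simp
  have c0: "(\<lambda>k. s k 0) \<longlonglongrightarrow> sl 0"
  proof -
    have e1: "\<And>k. s k 0 = complex_of_real (sqrt (Re (t k 0)))" using real_pos_sqrt sk0 tk0 by metis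
    have e2: "sl 0 = complex_of_real (sqrt (Re (tL 0)))" using real_pos_sqrt sl0 tl0 by metis
    have "(\<lambda>k. t k 0) \<longlonglongrightarrow> tL 0" using ct unfolding conv_def by blast
    then have "(\<lambda>k. complex_of_real (sqrt (Re (t k 0)))) \<longlonglongrightarrow> complex_of_real (sqrt (Re (tL 0)))"
      by (intro tendsto_of_real tendsto_real_sqrt tendsto_Re)
    then show ?thesis using e1 e2 by simp
  qed
  show "(\<lambda>k. s k q) \<longlonglongrightarrow> sl q"
  proof (cases "q \<in> M")
    case False
    then show ?thesis using inM_notin[OF sk[rule_format]] inM_notin[OF sl] by simp
  next
    case True
    show ?thesis
    proof (rule M_induct[OF M, where P="\<lambda>q. (\<lambda>k. s k q) \<longlonglongrightarrow> sl q", OF _ True])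
      fix q assume q: "q \<in> M" and IH: "\<And>p. p \<in> M \<Longrightarrow> p < q \<Longrightarrow> (\<lambda>k. s k p) \<longlonglongrightarrow> sl p"
      show "(\<lambda>k. s k q) \<longlonglongrightarrow> sl q"
      proof (cases "q = 0")
        case True
        then show ?thesis using c0 by simp
      next
        case False
        then have qp: "0 < q" using good_nonneg[OF M q] by simp
        let ?R = "{p\<in>M. 0 < p \<and> p < q}"
        have nz: "\<And>k. s k 0 \<noteq> 0" using sk0 by (metis zero_complex.sel(1) less_irrefl)
        have nzl: "sl 0 \<noteq> 0" using sl0 by auto
        have ek: "\<And>k. s k q = (t k q - (\<Sum>p\<in>?R. s k p * s k (q - p))) / (2 * s k 0)"
        proof -
          fix k
          have "t k q = 2 * s k 0 * s k q + (\<Sum>p\<in>?R. s k p * s k (q - p))"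
            using sq_formula[OF M sk[rule_format] q qp] skk by simp
          then show "s k q = (t k q - (\<Sum>p\<in>?R. s k p * s k (q - p))) / (2 * s k 0)"
            using nz[of k] by (simp add: field_simps)
        qed
        have el: "sl q = (tL q - (\<Sum>p\<in>?R. sl p * sl (q - p))) / (2 * sl 0)"
        proof -
          have "tL q = 2 * sl 0 * sl q + (\<Sum>p\<in>?R. sl p * sl (q - p))"
            using sq_formula[OF M sl q qp] sll by simp
          then show ?thesis using nzl by (simp add: field_simps)
        qed
        have "(\<lambda>k. (t k q - (\<Sum>p\<in>?R. s k p * s k (q - p))) / (2 * s k 0))
            \<longlonglongrightarrow> (tL q - (\<Sum>p\<in>?R. sl p * sl (q - p))) / (2 * sl 0)"
        proof (intro tendsto_divide tendsto_diff tendsto_sum tendsto_mult tendsto_const)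
          show "(\<lambda>k. t k q) \<longlonglongrightarrow> tL q" using ct unfolding conv_def by blast
          show "(\<lambda>k. s k 0) \<longlonglongrightarrow> sl 0" by (rule c0)
          show "2 * sl 0 \<noteq> 0" using nzl by simp
          fix p assume p: "p \<in> ?R"
          show "(\<lambda>k. s k p) \<longlonglongrightarrow> sl p" using IH p by blast
          show "(\<lambda>k. s k (q - p)) \<longlonglongrightarrow> sl (q - p)"
          proof (cases "q - p \<in> M")
            case True
            then show ?thesis using IH p by simp
          next
            case False
            then show ?thesis using inM_notin[OF sk[rule_format]] inM_notin[OF sl] by simp
          qed
        qed
        then show ?thesis using ek el by simp
      qed
    qed
  qed
qed

lemma inv_conv:
  assumes M: "good M" and ak: "\<forall>k. inM M (a k)" and al: "inM M al" and ca: "conv a al"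
    and bk: "\<forall>k. inM M (b k)" and abk: "\<forall>k. lc_mult (a k) (b k) = lc_one"
    and bl: "inM M bl" and abl: "lc_mult al bl = lc_one"
  shows "conv b bl"
  unfolding conv_def
proof
  fix q
  have z0: "0 \<in> M" using good_0[OF M] .
  have ab0: "\<And>k. a k 0 * b k 0 = 1"
    using prod0[OF M ak[rule_format] bk[rule_format]] abk by (metis lc_one_def)
  have abl0: "al 0 * bl 0 = 1"
    using prod0[OF M al bl] abl by (simp add: lc_one_def)
  have nz: "\<And>k. a k 0 \<noteq> 0" using ab0 by (metis mult_zero_left zero_neq_one)
  have nzl: "al 0 \<noteq> 0" using abl0 by (metis mult_zero_left zero_neq_one)
  have c0: "(\<lambda>k. b k 0) \<longlonglongrightarrow> bl 0"
  proof -
    have e1: "\<And>k. b k 0 = 1 / a k 0" using ab0 nz by (simp add: field_simps)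
    have e2: "bl 0 = 1 / al 0" using abl0 nzl by (simp add: field_simps)
    have "(\<lambda>k. a k 0) \<longlonglongrightarrow> al 0" using ca unfolding conv_def by blast
    then have "(\<lambda>k. 1 / a k 0) \<longlonglongrightarrow> 1 / al 0" using nzl by (intro tendsto_divide tendsto_const)
    then show ?thesis using e1 e2 by simp
  qed
  show "(\<lambda>k. b k q) \<longlonglongrightarrow> bl q"
  proof (cases "q \<in> M")
    case False
    then show ?thesis using inM_notin[OF bk[rule_format]] inM_notin[OF bl] by simp
  next
    case True
    show ?thesis
    proof (rule M_induct[OF M, where P="\<lambda>q. (\<lambda>k. b k q) \<longlonglongrightarrow> bl q", OF _ True])
      fix q assume q: "q \<in> M" and IH: "\<And>p. p \<in> M \<Longrightarrow> p < q \<Longrightarrow> (\<lambda>k. b k p) \<longlonglongrightarrow> bl p"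
      show "(\<lambda>k. b k q) \<longlonglongrightarrow> bl q"
      proof (cases "q = 0")
        case True
        then show ?thesis using c0 by simp
      next
        case False
        let ?R = "{p\<in>M. 0 < p \<and> p \<le> q}"
        have ek: "\<And>k. b k q = - (\<Sum>p\<in>?R. a k p * b k (q - p)) / a k 0"
        proof -
          fix k
          have "lc_mult (a k) (b k) q = a k 0 * b k q + (\<Sum>p\<in>?R. a k p * b k (q - p))"
            by (rule prod_formula[OF M ak[rule_format, of k] bk[rule_format, of k] q])
          moreover have "lc_mult (a k) (b k) q = 0" using abk False by (simp add: lc_one_def)
          ultimately have "0 = a k 0 * b k q + (\<Sum>p\<in>?R. a k p * b k (q - p))" by simp
          then show "b k q = - (\<Sum>p\<in>?R. a k p * b k (q - p)) / a k 0"
            using nz[of k] by (simp add: field_simps add_eq_0_iff)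
        qed
        have el: "bl q = - (\<Sum>p\<in>?R. al p * bl (q - p)) / al 0"
        proof -
          have "0 = al 0 * bl q + (\<Sum>p\<in>?R. al p * bl (q - p))"
            using prod_formula[OF M al bl q] abl False by (simp add: lc_one_def)
          then show ?thesis using nzl by (simp add: field_simps add_eq_0_iff)
        qed
        have "(\<lambda>k. - (\<Sum>p\<in>?R. a k p * b k (q - p)) / a k 0)
            \<longlonglongrightarrow> - (\<Sum>p\<in>?R. al p * bl (q - p)) / al 0"
        proof (intro tendsto_divide tendsto_minus tendsto_sum tendsto_mult)
          show "(\<lambda>k. a k 0) \<longlonglongrightarrow> al 0" using ca unfolding conv_def by blast
          show "al 0 \<noteq> 0" by (rule nzl)
          fix p assume p: "p \<in> ?R"
          show "(\<lambda>k. a k p) \<longlonglongrightarrow> al p" using ca unfolding conv_def by blast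
          show "(\<lambda>k. b k (q - p)) \<longlonglongrightarrow> bl (q - p)"
          proof (cases "q - p \<in> M")
            case True
            then show ?thesis using IH p by simp
          next
            case False
            then show ?thesis using inM_notin[OF bk[rule_format]] inM_notin[OF bl] by simp
          qed
        qed
        then show ?thesis using ek el by simp
      qed
    qed
  qed
qed


lemma Rep_lf_lf: "left_finite (Rep_lf a)" using Rep_lf by blast
lemma Rep_Abs: "left_finite a \<Longrightarrow> Rep_lf (Abs_lf a) = a" by (simp add: Abs_lf_inverse)

lemma wk_conv_shift:
  assumes M: "good M" and dM: "\<forall>k. inM M (d k)" and dc: "\<forall>q. (\<lambda>k. d k q) \<longlonglongrightarrow> 0"
    and sd: "\<forall>k. lc_sub (s (k + K0)) l = d k"
  shows "lc_wk_conv s l"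
  unfolding lc_wk_conv_def
proof (intro allI impI)
  fix r :: real assume r: "r > 0"
  define R :: rat where "R = of_int \<lceil>1 / r\<rceil> + 1"
  define F where "F = {q\<in>M. q < R}"
  have finF: "finite F" unfolding F_def using good_fin[OF M] .
  have inF: "\<And>q. real_of_rat q \<le> 1 / r \<Longrightarrow> q \<in> M \<Longrightarrow> q \<in> F"
  proof -
    fix q assume q: "real_of_rat q \<le> 1 / r" "q \<in> M"
    have "1 / r \<le> of_int \<lceil>1 / r\<rceil>" by (rule le_of_int_ceiling)
    moreover have "real_of_rat R = of_int \<lceil>1 / r\<rceil> + 1" unfolding R_def
      by (simp add: of_rat_add of_rat_of_int_eq)
    ultimately have "real_of_rat q < real_of_rat R" using q(1) by linarith
    then have "q < R" by (simp add: of_rat_less)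
    then show "q \<in> F" unfolding F_def using q(2) by simp
  qed
  have "(\<lambda>k. \<Sum>q\<in>F. norm (d k q)) \<longlonglongrightarrow> (\<Sum>q\<in>F. 0)"
    using dc by (intro tendsto_sum tendsto_norm_zero) auto
  then have "(\<lambda>k. \<Sum>q\<in>F. norm (d k q)) \<longlonglongrightarrow> 0" by simp
  from LIMSEQ_D[OF this r] obtain N where N: "\<forall>k\<ge>N. norm ((\<Sum>q\<in>F. norm (d k q)) - 0) < r" by blast
  show "\<exists>N0. \<forall>k>N0. lc_seminorm (1 / r) (lc_sub (s k) l) < r"
  proof (intro exI allI impI)
    fix k assume k: "k > N + K0"
    define j where "j = k - K0"
    have kj: "k = j + K0" "j \<ge> N" using k unfolding j_def by auto
    have sub: "lc_sub (s k) l = d j" using sd kj(1) by simp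
    have sumlt: "(\<Sum>q\<in>F. norm (d j q)) < r"
    proof -
      have "norm ((\<Sum>q\<in>F. norm (d j q)) - 0) < r" using N kj(2) by blast
      moreover have "0 \<le> (\<Sum>q\<in>F. norm (d j q))" by (simp add: sum_nonneg)
      ultimately show ?thesis by simp
    qed
    have "lc_seminorm (1 / r) (d j) \<le> (\<Sum>q\<in>F. norm (d j q))"
      unfolding lc_seminorm_def
    proof (rule cSup_least)
      show "{cmod (d j q) |q. real_of_rat q \<le> 1 / r} \<noteq> {}"
        using r by (auto intro!: exI[of _ 0])
      fix x assume "x \<in> {cmod (d j q) |q. real_of_rat q \<le> 1 / r}"
      then obtain q where q: "x = cmod (d j q)" "real_of_rat q \<le> 1 / r" by blast
      show "x \<le> (\<Sum>q\<in>F. norm (d j q))"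
      proof (cases "d j q = 0")
        case True
        then show ?thesis using q(1) by (simp add: sum_nonneg)
      next
        case False
        then have "q \<in> M" using dM unfolding inM_def by blast
        then have "q \<in> F" using inF q(2) by blast
        then have "norm (d j q) \<le> (\<Sum>q\<in>F. norm (d j q))"
          by (rule member_le_sum) (auto simp: finF)
        then show ?thesis using q(1) by simp
      qed
    qed
    then show "lc_seminorm (1 / r) (lc_sub (s k) l) < r" using sub sumlt by simp
  qed
qed

lemma re_mult_real:
  assumes M: "good M" and c: "inM M c" "lc_real c" and z: "inM M z"
  shows "lc_re (lc_mult c z) = lc_mult c (lc_re z)" "lc_im (lc_mult c z) = lc_mult c (lc_im z)"
proof -
  have cr: "\<And>p. c p = complex_of_real (Re (c p))" using c(2) unfolding lc_real_def by (simp add: complex_eq_iff)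
  show "lc_re (lc_mult c z) = lc_mult c (lc_re z)"
  proof
    fix q
    have "lc_re (lc_mult c z) q = complex_of_real (Re (\<Sum>p\<in>{p\<in>M. p \<le> q}. c p * z (q - p)))"
      unfolding lc_re_def using lc_mult_M[OF M c(1) z] by simp
    also have "\<dots> = (\<Sum>p\<in>{p\<in>M. p \<le> q}. c p * lc_re z (q - p))"
      unfolding lc_re_def of_real_sum Re_sum
    proof (rule sum.cong[OF refl])
      fix p
      have "Im (c p) = 0" using c(2) unfolding lc_real_def by blast
      then show "complex_of_real (Re (c p * z (q - p))) = c p * complex_of_real (Re (z (q - p)))"
        by (simp add: complex_eq_iff)
    qed
    also have "\<dots> = lc_mult c (lc_re z) q" using lc_mult_M[OF M c(1) inM_re[OF z]] by simp
    finally show "lc_re (lc_mult c z) q = lc_mult c (lc_re z) q" .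
  qed
  show "lc_im (lc_mult c z) = lc_mult c (lc_im z)"
  proof
    fix q
    have "lc_im (lc_mult c z) q = complex_of_real (Im (\<Sum>p\<in>{p\<in>M. p \<le> q}. c p * z (q - p)))"
      unfolding lc_im_def using lc_mult_M[OF M c(1) z] by simp
    also have "\<dots> = (\<Sum>p\<in>{p\<in>M. p \<le> q}. c p * lc_im z (q - p))"
      unfolding lc_im_def of_real_sum Im_sum
    proof (rule sum.cong[OF refl])
      fix p
      have "Im (c p) = 0" using c(2) unfolding lc_real_def by blast
      then show "complex_of_real (Im (c p * z (q - p))) = c p * complex_of_real (Im (z (q - p)))"
        by (simp add: complex_eq_iff)
    qed
    also have "\<dots> = lc_mult c (lc_im z) q" using lc_mult_M[OF M c(1) inM_im[OF z]] by simp
    finally show "lc_im (lc_mult c z) q = lc_mult c (lc_im z) q" .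
  qed
qed

definition RE :: "lf \<Rightarrow> lf" where "RE z = Abs_lf (lc_re (Rep_lf z))"
definition IM :: "lf \<Rightarrow> lf" where "IM z = Abs_lf (lc_im (Rep_lf z))"
definition T1l :: "lf \<Rightarrow> lf" where "T1l z = RE z * RE z + IM z * IM z"

lemma Rep_RE: "Rep_lf (RE z) = lc_re (Rep_lf z)" unfolding RE_def using Rep_Abs lf_re Rep_lf_lf by blast
lemma Rep_IM: "Rep_lf (IM z) = lc_im (Rep_lf z)" unfolding IM_def using Rep_Abs lf_im Rep_lf_lf by blast

lemma T1_Rep: "T1 (Rep_lf z) = Rep_lf (T1l z)"
  unfolding T1_def T1l_def by (simp add: plus_lf.rep_eq times_lf.rep_eq Rep_RE Rep_IM)

lemma RE_scale:
  assumes M: "good M" and c: "inM M (Rep_lf C)" "lc_real (Rep_lf C)" and z: "inM M (Rep_lf Z)"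
  shows "RE (C * Z) = C * RE Z" "IM (C * Z) = C * IM Z"
proof -
  have "Rep_lf (RE (C * Z)) = Rep_lf (C * RE Z)"
    by (simp add: Rep_RE times_lf.rep_eq re_mult_real[OF M c z])
  then show "RE (C * Z) = C * RE Z" using Rep_lf_inject by blast
  have "Rep_lf (IM (C * Z)) = Rep_lf (C * IM Z)"
    by (simp add: Rep_IM times_lf.rep_eq re_mult_real[OF M c z])
  then show "IM (C * Z) = C * IM Z" using Rep_lf_inject by blast
qed

lemma T1l_scale:
  assumes M: "good M" and c: "inM M (Rep_lf C)" "lc_real (Rep_lf C)" and z: "inM M (Rep_lf Z)"
  shows "T1l (C * Z) = C * C * T1l Z"
  unfolding T1l_def RE_scale[OF M c z] by (simp add: algebra_simps)


lemma conv_shift: "conv f l \<Longrightarrow> conv (\<lambda>k. f (k + K)) l"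
  unfolding conv_def using LIMSEQ_ignore_initial_segment by blast

lemma real_sum: "(\<And>j. j < n \<Longrightarrow> lc_real (f j)) \<Longrightarrow> lc_real (lc_sum n f)"
  unfolding lc_real_def lc_sum_def by (simp add: Im_sum)

lemma T1_inM: "good M \<Longrightarrow> inM M z \<Longrightarrow> inM M (T1 z)"
  unfolding T1_def by (intro inM_add inM_mult inM_re inM_im) auto

lemma T1_conv:
  assumes M: "good M" and zk: "\<forall>k. inM M (z k)" and zl: "inM M zl" and c: "conv z zl"
  shows "conv (\<lambda>k. T1 (z k)) (T1 zl)"
  unfolding T1_def
  by (intro conv_add conv_mult[OF M] conv_re conv_im c allI inM_re inM_im zl zk[rule_format])

lemma T1_0:
  assumes M: "good M" and z: "inM M z"
  shows "Re (T1 z 0) = (cmod (z 0))^2"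
proof -
  have "T1 z 0 = lc_re z 0 * lc_re z 0 + lc_im z 0 * lc_im z 0"
    unfolding T1_def lc_add_def using prod0[OF M inM_re[OF z] inM_re[OF z]] prod0[OF M inM_im[OF z] inM_im[OF z]]
    by simp
  moreover have "(cmod (z 0))^2 = (Re (z 0))^2 + (Im (z 0))^2" by (rule cmod_power2)
  ultimately show ?thesis unfolding lc_re_def lc_im_def by (simp add: power2_eq_square)
qed

lemma pow_real: "lc_real (Rep_lf X) \<Longrightarrow> lc_real (Rep_lf (X ^ k))"
proof (induction k)
  case 0
  then show ?case by (simp add: one_lf.rep_eq lc_real_def lc_one_def)
next
  case (Suc k)
  then show ?case by (simp add: times_lf.rep_eq real_mult)
qed

lemma pow_pos: "lc_real (Rep_lf X) \<Longrightarrow> lc_pos (Rep_lf X) \<Longrightarrow> lc_pos (Rep_lf (X ^ k))"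
proof (induction k)
  case 0
  show ?case by (simp add: one_lf.rep_eq lc_pos_def lc_one_def)
next
  case (Suc k)
  then show ?case by (simp add: times_lf.rep_eq pos_mult pow_real)
qed


theorem mainTheorem8:
  fixes n :: nat and A :: "nat \<Rightarrow> nat \<Rightarrow> lc" and nu :: "nat \<Rightarrow> lc"
    and x :: "nat \<Rightarrow> lc" and w :: "nat \<Rightarrow> nat \<Rightarrow> lc"
  assumes n_pos: "n \<ge> 1"
    and A_in: "\<forall>i<n. \<forall>j<n. left_finite (A i j)"
    and diag: "lc_diagonalizable_with n A nu"
    and nu_in: "\<forall>j<n. left_finite (nu j) \<and> lc_real (nu j)"
    and nu_fin: "\<forall>j<n. lc_at_most_finite (nu j)"
    and nu_dom: "nu 0 0 = 1" "n \<ge> 2 \<longrightarrow> 1 > \<bar>Re (nu 1 0)\<bar>"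
    and nu_ord: "\<forall>j. j + 1 < n \<longrightarrow> j \<ge> 1 \<longrightarrow> \<bar>Re (nu j 0)\<bar> \<ge> \<bar>Re (nu (j + 1) 0)\<bar>"
    and w_in: "\<forall>j<n. \<forall>i<n. left_finite (w j i)"
    and x_decomp: "\<forall>i<n. x i = lc_sum n (\<lambda>j. w j i)"
    and w_eig: "\<forall>j<n. \<forall>i<n. lc_mat_vec n A (w j) i = lc_mult (nu j) (w j i)"
    and w_fin: "\<forall>j<n. \<forall>i<n. lc_at_most_finite (w j i)"
    and w1_nz: "\<exists>i<n. w 0 i 0 \<noteq> 0"
  shows "lc_vec_wk_conv n
           (\<lambda>k. lc_normalize n ((lc_mat_vec n A ^^ k) x))
           (lc_normalize n (w 0))"
proof -
  have n0: "0 < n" using n_pos by simp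
  define G0 where "G0 = (\<Union>j\<in>{..<n}. {q. nu j q \<noteq> 0}) \<union> (\<Union>j\<in>{..<n}. \<Union>i\<in>{..<n}. {q. w j i q \<noteq> 0})"
  have G0nn: "\<forall>s\<in>G0. 0 \<le> s"
  proof
    fix s assume "s \<in> G0"
    then consider (a) j where "j < n" "nu j s \<noteq> 0" | (b) j i where "j < n" "i < n" "w j i s \<noteq> 0"
      unfolding G0_def by blast
    then show "0 \<le> s"
    proof cases
      case a
      then have "\<not> s < 0" using nu_fin unfolding lc_at_most_finite_def by blast
      then show ?thesis by simp
    next
      case b
      then have "\<not> s < 0" using w_fin unfolding lc_at_most_finite_def by blast
      then show ?thesis by simp
    qed
  qed
  have G0lf: "\<forall>r. finite {s\<in>G0. s < r}"
  proof
    fix r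
    have "{s\<in>G0. s < r} \<subseteq> (\<Union>j\<in>{..<n}. {q. q < r \<and> nu j q \<noteq> 0}) \<union> (\<Union>j\<in>{..<n}. \<Union>i\<in>{..<n}. {q. q < r \<and> w j i q \<noteq> 0})"
      unfolding G0_def by auto
    moreover have "finite ((\<Union>j\<in>{..<n}. {q. q < r \<and> nu j q \<noteq> 0}) \<union> (\<Union>j\<in>{..<n}. \<Union>i\<in>{..<n}. {q. q < r \<and> w j i q \<noteq> 0}))"
    proof (intro finite_UnI finite_UN_I finite_lessThan)
      fix j assume "j \<in> {..<n}"
      then show "finite {q. q < r \<and> nu j q \<noteq> 0}" using nu_in unfolding left_finite_def by blast
      fix i assume "i \<in> {..<n}"
      then show "finite {q. q < r \<and> w j i q \<noteq> 0}" using w_in \<open>j \<in> {..<n}\<close> unfolding left_finite_def by blast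
    qed
    ultimately show "finite {s\<in>G0. s < r}" by (rule finite_subset)
  qed
  define M where "M = gen G0"
  have M: "good M" unfolding M_def by (rule good_gen[OF G0nn G0lf])
  have nuM: "\<And>j. j < n \<Longrightarrow> inM M (nu j)"
    unfolding inM_def M_def
  proof (intro allI impI)
    fix j q assume "j < n" "nu j q \<noteq> 0"
    then have "q \<in> G0" unfolding G0_def by blast
    then show "q \<in> gen G0" by (rule gen_sub)
  qed
  have wM: "\<And>j i. j < n \<Longrightarrow> i < n \<Longrightarrow> inM M (w j i)"
    unfolding inM_def M_def
  proof (intro allI impI)
    fix j i q assume "j < n" "i < n" "w j i q \<noteq> 0"
    then have "q \<in> G0" unfolding G0_def by blast
    then show "q \<in> gen G0" by (rule gen_sub)
  qed
  define N where "N j = Abs_lf (nu j)" for j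
  define W where "W j i = Abs_lf (w j i)" for j i
  define AA where "AA i l = Abs_lf (A i l)" for i l
  have RN: "\<And>j. j < n \<Longrightarrow> Rep_lf (N j) = nu j" unfolding N_def using nu_in Rep_Abs by blast
  have RW: "\<And>j i. j < n \<Longrightarrow> i < n \<Longrightarrow> Rep_lf (W j i) = w j i" unfolding W_def using w_in Rep_Abs by blast
  have RA: "\<And>i l. i < n \<Longrightarrow> l < n \<Longrightarrow> Rep_lf (AA i l) = A i l" unfolding AA_def using A_in Rep_Abs by blast
  have mv: "\<And>i y. lc_mat_vec n A y i = lc_sum n (\<lambda>l. lc_mult (A i l) (y l))" unfolding lc_mat_vec_def by simp
  have eig: "\<And>j i. j < n \<Longrightarrow> i < n \<Longrightarrow> (\<Sum>l<n. AA i l * W j l) = N j * W j i"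
  proof -
    fix j i assume ji: "j < n" "i < n"
    have "Rep_lf (\<Sum>l<n. AA i l * W j l) = lc_sum n (\<lambda>l. lc_mult (A i l) (w j l))"
      unfolding Rep_sum by (rule lc_sum_cong) (simp add: times_lf.rep_eq RA RW ji)
    also have "\<dots> = lc_mat_vec n A (w j) i" by (rule mv[symmetric])
    also have "\<dots> = lc_mult (nu j) (w j i)" using w_eig ji by blast
    also have "\<dots> = Rep_lf (N j * W j i)" by (simp add: times_lf.rep_eq RN RW ji)
    finally show "(\<Sum>l<n. AA i l * W j l) = N j * W j i" using Rep_lf_inject by blast
  qed
  have Xf: "\<And>k i. i < n \<Longrightarrow> (lc_mat_vec n A ^^ k) x i = Rep_lf (\<Sum>j<n. N j ^ k * W j i)"
  proof -
    fix k show "\<And>i. i < n \<Longrightarrow> (lc_mat_vec n A ^^ k) x i = Rep_lf (\<Sum>j<n. N j ^ k * W j i)"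
    proof (induction k)
      case 0
      have "x i = lc_sum n (\<lambda>j. w j i)" using x_decomp 0 by blast
      also have "\<dots> = Rep_lf (\<Sum>j<n. N j ^ 0 * W j i)"
        unfolding Rep_sum by (rule lc_sum_cong) (simp add: RW 0)
      finally show ?case by simp
    next
      case (Suc k)
      have "(lc_mat_vec n A ^^ Suc k) x i = lc_sum n (\<lambda>l. lc_mult (A i l) ((lc_mat_vec n A ^^ k) x l))"
        using mv by simp
      also have "\<dots> = Rep_lf (\<Sum>l<n. AA i l * (\<Sum>j<n. N j ^ k * W j l))"
        unfolding Rep_sum by (rule lc_sum_cong) (simp add: times_lf.rep_eq RA Suc)
      also have "(\<Sum>l<n. AA i l * (\<Sum>j<n. N j ^ k * W j l)) = (\<Sum>l<n. \<Sum>j<n. N j ^ k * (AA i l * W j l))"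
        unfolding sum_distrib_left by (intro sum.cong refl) (simp add: mult.left_commute)
      also have "\<dots> = (\<Sum>j<n. \<Sum>l<n. N j ^ k * (AA i l * W j l))" by (rule sum.swap)
      also have "\<dots> = (\<Sum>j<n. N j ^ k * (\<Sum>l<n. AA i l * W j l))" by (simp add: sum_distrib_left)
      also have "\<dots> = (\<Sum>j<n. N j ^ Suc k * W j i)"
        by (rule sum.cong[OF refl]) (simp add: eig Suc.prems ac_simps)
      finally show ?case .
    qed
  qed
  obtain iota where iM: "inM M iota" and ii: "lc_mult (nu 0) iota = lc_one"
    using inv_M[OF M nuM[OF n0]] nu_dom(1) by auto
  define I where "I = Abs_lf iota"
  have RI: "Rep_lf I = iota" unfolding I_def using inM_lf[OF M iM] Rep_Abs by blast
  have NI: "N 0 * I = 1"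
  proof -
    have "Rep_lf (N 0 * I) = Rep_lf 1" by (simp add: times_lf.rep_eq RN[OF n0] RI ii one_lf.rep_eq)
    then show ?thesis using Rep_lf_inject by blast
  qed
  define rho where "rho j = N j * I" for j
  have Nrho: "\<And>j. N j = rho j * N 0"
  proof -
    fix j have "rho j * N 0 = N j * (N 0 * I)" unfolding rho_def by (simp add: ac_simps)
    then show "N j = rho j * N 0" using NI by simp
  qed
  have rho_0: "rho 0 = 1" unfolding rho_def using NI .
  define Y where "Y k i = (\<Sum>j<n. rho j ^ k * W j i)" for k i
  have XY: "\<And>k i. (\<Sum>j<n. N j ^ k * W j i) = N 0 ^ k * Y k i"
    unfolding Y_def sum_distrib_left
  proof (intro sum.cong refl)
    fix k i j
    have "N j ^ k = rho j ^ k * N 0 ^ k" by (subst Nrho[of j]) (rule power_mult_distrib)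
    then show "N j ^ k * W j i = N 0 ^ k * (rho j ^ k * W j i)" by (simp add: ac_simps)
  qed
  have iota0: "iota 0 = 1"
  proof -
    have "nu 0 0 * iota 0 = 1" using prod0[OF M nuM[OF n0] iM] ii by (simp add: lc_one_def)
    then show ?thesis using nu_dom(1) by simp
  qed
  have rhoM: "\<And>j. j < n \<Longrightarrow> inM M (Rep_lf (rho j))"
    unfolding rho_def by (simp add: times_lf.rep_eq RN RI inM_mult nuM iM M)
  have rho0: "\<And>j. j < n \<Longrightarrow> Rep_lf (rho j) 0 = nu j 0"
    unfolding rho_def using prod0[OF M nuM iM] iota0 by (simp add: times_lf.rep_eq RN RI)
  have chain: "\<And>j. 1 \<le> j \<Longrightarrow> j < n \<Longrightarrow> \<bar>Re (nu j 0)\<bar> \<le> \<bar>Re (nu 1 0)\<bar>"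
  proof -
    fix j show "1 \<le> j \<Longrightarrow> j < n \<Longrightarrow> \<bar>Re (nu j 0)\<bar> \<le> \<bar>Re (nu 1 0)\<bar>"
    proof (induction j)
      case 0 then show ?case by simp
    next
      case (Suc j)
      show ?case
      proof (cases "j = 0")
        case True then show ?thesis by simp
      next
        case False
        then have "\<bar>Re (nu j 0)\<bar> \<le> \<bar>Re (nu 1 0)\<bar>" using Suc by simp
        moreover have "\<bar>Re (nu (j + 1) 0)\<bar> \<le> \<bar>Re (nu j 0)\<bar>" using nu_ord Suc.prems False by simp
        ultimately show ?thesis by simp
      qed
    qed
  qed
  have rho_small: "\<And>j. 1 \<le> j \<Longrightarrow> j < n \<Longrightarrow> norm (Rep_lf (rho j) 0) < 1"
  proof -
    fix j assume j: "1 \<le> j" "j < n"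
    have "Im (nu j 0) = 0" using nu_in j unfolding lc_real_def by blast
    then have "norm (nu j 0) = \<bar>Re (nu j 0)\<bar>" by (simp add: cmod_def)
    moreover have "\<bar>Re (nu 1 0)\<bar> < 1" using nu_dom(2) j by simp
    ultimately show "norm (Rep_lf (rho j) 0) < 1" using chain[OF j] rho0 j by simp
  qed
  have YM: "\<And>k i. i < n \<Longrightarrow> inM M (Rep_lf (Y k i))"
    unfolding Y_def Rep_sum
    by (intro inM_sum) (simp add: times_lf.rep_eq inM_mult M pow_inM rhoM RW wM)
  have Yconv: "\<And>i. i < n \<Longrightarrow> conv (\<lambda>k. Rep_lf (Y k i)) (w 0 i)"
  proof -
    fix i assume i: "i < n"
    define g where "g (j::nat) = (if j = 0 then w 0 i else lc_zero)" for j
    have "conv (\<lambda>k. lc_sum n (\<lambda>j. Rep_lf (rho j ^ k * W j i))) (lc_sum n g)"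
    proof (rule conv_sum)
      fix j assume j: "j < n"
      show "conv (\<lambda>k. Rep_lf (rho j ^ k * W j i)) (g j)"
      proof (cases "j = 0")
        case True
        then show ?thesis unfolding g_def using conv_const[of "w 0 i"]
          by (simp add: rho_0 RW[OF n0 i])
      next
        case False
        have c0: "conv (\<lambda>k. Rep_lf (rho j ^ k)) lc_zero"
          unfolding conv_def lc_zero_def using pow_conv0[OF M rhoM[OF j] rho_small] j False by simp
        have "conv (\<lambda>k. lc_mult (Rep_lf (rho j ^ k)) (w j i)) (lc_mult lc_zero (w j i))"
          by (rule conv_mult[OF M _ _ c0 conv_const]) (auto intro: pow_inM[OF M rhoM[OF j]] wM[OF j i] inM_zero)
        then show ?thesis unfolding g_def using False by (simp add: times_lf.rep_eq RW[OF j i] lc_mult_zero)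
      qed
    qed
    moreover have "lc_sum n g = w 0 i"
      unfolding lc_sum_def g_def lc_zero_def
    proof
      fix q
      have "(\<Sum>j<n. (if j = 0 then w 0 i else (\<lambda>q. 0)) q) = (\<Sum>j<n. if j = 0 then w 0 i q else 0)"
        by (intro sum.cong refl) simp
      also have "\<dots> = w 0 i q" using n0 by (simp add: sum.delta)
      finally show "(\<Sum>j<n. (if j = 0 then w 0 i else (\<lambda>q. 0)) q) = w 0 i q" .
    qed
    ultimately show "conv (\<lambda>k. Rep_lf (Y k i)) (w 0 i)" unfolding Y_def Rep_sum by simp
  qed
  define Tk where "Tk k = (\<Sum>i<n. T1l (Y k i))" for k
  define Tinf where "Tinf = lc_sum n (\<lambda>i. T1 (w 0 i))"
  have RTk: "\<And>k. Rep_lf (Tk k) = lc_sum n (\<lambda>i. T1 (Rep_lf (Y k i)))"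
    unfolding Tk_def Rep_sum T1_Rep ..
  have TkM: "\<And>k. inM M (Rep_lf (Tk k))"
    unfolding RTk by (intro inM_sum T1_inM[OF M] YM)
  have TinfM: "inM M Tinf"
    unfolding Tinf_def by (intro inM_sum T1_inM[OF M] wM n0)
  have Tconv: "conv (\<lambda>k. Rep_lf (Tk k)) Tinf"
    unfolding RTk Tinf_def
    by (intro conv_sum T1_conv[OF M] allI YM wM n0 Yconv)
  have Tkreal: "\<And>k q. Rep_lf (Tk k) q \<in> \<real>"
  proof -
    fix k q
    have "lc_real (Rep_lf (Tk k))" unfolding RTk
      by (intro real_sum) (use T1_props Rep_lf_lf in blast)
    then show "Rep_lf (Tk k) q \<in> \<real>" unfolding lc_real_def complex_is_Real_iff by blast
  qed
  have Tinfreal: "\<And>q. Tinf q \<in> \<real>"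
  proof -
    fix q
    have "lc_real Tinf" unfolding Tinf_def
      by (intro real_sum) (use T1_props w_in n0 in blast)
    then show "Tinf q \<in> \<real>" unfolding lc_real_def complex_is_Real_iff by blast
  qed
  have Tinf0: "Re (Tinf 0) > 0"
  proof -
    obtain i0 where i0: "i0 < n" "w 0 i0 0 \<noteq> 0" using w1_nz by blast
    have e: "Re (Tinf 0) = (\<Sum>i<n. (cmod (w 0 i 0))^2)"
      unfolding Tinf_def lc_sum_def Re_sum
      by (intro sum.cong refl) (simp add: T1_0[OF M wM[OF n0]])
    have "(cmod (w 0 i0 0))^2 \<le> (\<Sum>i<n. (cmod (w 0 i 0))^2)"
      by (rule member_le_sum) (use i0 in auto)
    moreover have "(cmod (w 0 i0 0))^2 > 0" using i0 by simp
    ultimately show ?thesis using e by linarith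
  qed
  have "(\<lambda>k. Re (Rep_lf (Tk k) 0)) \<longlonglongrightarrow> Re (Tinf 0)"
    using Tconv unfolding conv_def by (intro tendsto_Re) blast
  then have "eventually (\<lambda>k. Re (Rep_lf (Tk k) 0) > 0) sequentially"
    using Tinf0 by (rule order_tendstoD(1))
  then obtain K0 where K0: "\<And>k. k \<ge> K0 \<Longrightarrow> Re (Rep_lf (Tk k) 0) > 0"
    unfolding eventually_sequentially by blast
  have "\<forall>k. \<exists>s. inM M s \<and> is_sqrt (Rep_lf (Tk (k + K0))) s \<and> Re (s 0) > 0 \<and> (\<forall>q. s q \<in> \<real>)"
  proof
    fix k show "\<exists>s. inM M s \<and> is_sqrt (Rep_lf (Tk (k + K0))) s \<and> Re (s 0) > 0 \<and> (\<forall>q. s q \<in> \<real>)"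
      using sqrt_M_is[OF M TkM] Tkreal K0[of "k + K0"] by simp
  qed
  then obtain S where S: "\<And>k. inM M (S k)" "\<And>k. is_sqrt (Rep_lf (Tk (k + K0))) (S k)"
    "\<And>k. Re (S k 0) > 0" "\<And>k q. S k q \<in> \<real>"
    by metis
  obtain Sinf where Sinf: "inM M Sinf" "is_sqrt Tinf Sinf" "Re (Sinf 0) > 0" "\<And>q. Sinf q \<in> \<real>"
    using sqrt_M_is[OF M TinfM] Tinfreal Tinf0 by blast
  have "\<forall>k. \<exists>b. inM M b \<and> lc_mult (S k) b = lc_one"
  proof
    fix k have "S k 0 \<noteq> 0" using S(3)[of k] by auto
    then show "\<exists>b. inM M b \<and> lc_mult (S k) b = lc_one" using inv_M[OF M S(1)] by blast
  qed
  then obtain B where B: "\<And>k. inM M (B k)" "\<And>k. lc_mult (S k) (B k) = lc_one" by metis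
  have "Sinf 0 \<noteq> 0" using Sinf(3) by auto
  then obtain Binf where Binf: "inM M Binf" "lc_mult Sinf Binf = lc_one"
    using inv_M[OF M Sinf(1)] by blast
  have Sconv: "conv S Sinf"
  proof (rule sqrt_conv[OF M _ TinfM conv_shift[OF Tconv, of K0]])
    show "\<forall>k. inM M (Rep_lf (Tk (k + K0)))" using TkM by blast
    show "\<forall>k. inM M (S k)" using S(1) by blast
    show "\<forall>k. lc_mult (S k) (S k) = Rep_lf (Tk (k + K0))" using S(2) unfolding is_sqrt_def by blast
    show "\<forall>k. Re (S k 0) > 0 \<and> S k 0 \<in> \<real>" using S(3,4) by blast
    show "inM M Sinf" by (rule Sinf(1))
    show "lc_mult Sinf Sinf = Tinf" using Sinf(2) unfolding is_sqrt_def by blast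
    show "Re (Sinf 0) > 0" "Sinf 0 \<in> \<real>" using Sinf(3,4) by auto
  qed
  have Bconv: "conv B Binf"
    by (rule inv_conv[OF M _ Sinf(1) Sconv _ _ Binf(1) Binf(2)]) (use S(1) B in auto)
  have nw: "\<And>i. i < n \<Longrightarrow> lc_normalize n (w 0) i = lc_mult Binf (w 0 i)"
  proof -
    fix i assume i: "i < n"
    have "lc_norm2 n (w 0) = lc_sqrt Tinf"
      unfolding Tinf_def by (rule norm2_eq) (use w_in n0 in blast)
    also have "\<dots> = Sinf" by (rule lc_sqrt_eq[OF Sinf(2)])
    finally have "lc_inv (lc_norm2 n (w 0)) = Binf"
      using lc_inv_eq[OF inM_lf[OF M Sinf(1)] inM_lf[OF M Binf(1)] Binf(2)] by simp
    then show "lc_normalize n (w 0) i = lc_mult Binf (w 0 i)" unfolding lc_normalize_def by simp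
  qed
  have nu0pos: "lc_pos (nu 0)"
    unfolding lc_pos_def using nu_dom(1) nu_fin n0 unfolding lc_at_most_finite_def
    by (intro exI[of _ 0]) auto
  have nu0real: "lc_real (nu 0)" using nu_in n0 by blast
  have nx: "\<And>k i. i < n \<Longrightarrow> lc_normalize n ((lc_mat_vec n A ^^ (k + K0)) x) i = lc_mult (B k) (Rep_lf (Y (k + K0) i))"
  proof -
    fix k i assume i: "i < n"
    define m where "m = k + K0"
    define C where "C = N 0 ^ m"
    define X where "X = (lc_mat_vec n A ^^ m) x"
    have XR: "\<And>i. i < n \<Longrightarrow> X i = Rep_lf (C * Y m i)" unfolding X_def C_def using Xf XY by simp
    have CM: "inM M (Rep_lf C)" unfolding C_def by (rule pow_inM[OF M]) (simp add: RN[OF n0] nuM[OF n0])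
    have Creal: "lc_real (Rep_lf C)" unfolding C_def by (rule pow_real) (simp add: RN[OF n0] nu0real)
    have Cpos: "lc_pos (Rep_lf C)" unfolding C_def by (rule pow_pos) (simp_all add: RN[OF n0] nu0real nu0pos)
    have sumT: "lc_sum n (\<lambda>i. T1 (X i)) = Rep_lf (C * C * Tk m)"
    proof -
      have "lc_sum n (\<lambda>i. T1 (X i)) = lc_sum n (\<lambda>i. Rep_lf (C * C * T1l (Y m i)))"
      proof (rule lc_sum_cong)
        fix i assume "i < n"
        then show "T1 (X i) = Rep_lf (C * C * T1l (Y m i))"
          using XR T1_Rep T1l_scale[OF M CM Creal YM] by simp
      qed
      also have "\<dots> = Rep_lf (C * C * Tk m)"
        unfolding Tk_def sum_distrib_left Rep_sum ..
      finally show ?thesis .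
    qed
    define SK where "SK = Abs_lf (S k)"
    have RSK: "Rep_lf SK = S k" unfolding SK_def using inM_lf[OF M S(1)] Rep_Abs by blast
    have SKSK: "SK * SK = Tk m"
    proof -
      have "Rep_lf (SK * SK) = Rep_lf (Tk m)" using S(2)[of k] unfolding m_def is_sqrt_def
        by (simp add: times_lf.rep_eq RSK)
      then show ?thesis using Rep_lf_inject by blast
    qed
    have Sreal: "lc_real (S k)" using S(2)[of k] unfolding is_sqrt_def by blast
    have Spos: "lc_pos (S k)"
    proof -
      have "S k \<noteq> lc_zero" using S(3)[of k] unfolding lc_zero_def by auto
      then show ?thesis using S(2)[of k] unfolding is_sqrt_def lc_nonneg_def by blast
    qed
    have isq: "is_sqrt (Rep_lf (C * C * Tk m)) (Rep_lf (C * SK))"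
      unfolding is_sqrt_def
    proof (intro conjI)
      show "left_finite (Rep_lf (C * SK))" by (rule Rep_lf_lf)
      show "lc_real (Rep_lf (C * SK))" by (simp add: times_lf.rep_eq RSK real_mult Creal Sreal)
      show "lc_nonneg (Rep_lf (C * SK))" unfolding lc_nonneg_def
        by (simp add: times_lf.rep_eq RSK pos_mult Creal Sreal Cpos Spos)
      have "(C * SK) * (C * SK) = C * C * (SK * SK)" by (simp add: ac_simps)
      then have e: "(C * SK) * (C * SK) = C * C * Tk m" using SKSK by simp
      have "lc_mult (Rep_lf (C * SK)) (Rep_lf (C * SK)) = Rep_lf ((C * SK) * (C * SK))"
        by (simp add: times_lf.rep_eq)
      then show "lc_mult (Rep_lf (C * SK)) (Rep_lf (C * SK)) = Rep_lf (C * C * Tk m)"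
        unfolding e .
    qed
    have nrm: "lc_norm2 n X = Rep_lf (C * SK)"
    proof -
      have "lc_norm2 n X = lc_sqrt (lc_sum n (\<lambda>i. T1 (X i)))" by (rule norm2_eq) (use XR Rep_lf_lf in auto)
      then show ?thesis using sumT lc_sqrt_eq[OF isq] by simp
    qed
    define BK where "BK = Abs_lf (B k)"
    have RBK: "Rep_lf BK = B k" unfolding BK_def using inM_lf[OF M B(1)] Rep_Abs by blast
    have SB: "SK * BK = 1"
    proof -
      have "Rep_lf (SK * BK) = Rep_lf 1" using B(2)[of k] by (simp add: times_lf.rep_eq RSK RBK one_lf.rep_eq)
      then show ?thesis using Rep_lf_inject by blast
    qed
    define IC where "IC = I ^ m"
    have CIC: "C * IC = 1" unfolding C_def IC_def using NI by (simp add: power_mult_distrib[symmetric])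
    have inv: "lc_inv (Rep_lf (C * SK)) = Rep_lf (IC * BK)"
    proof (rule lc_inv_eq[OF Rep_lf_lf Rep_lf_lf])
      have "(C * SK) * (IC * BK) = (C * IC) * (SK * BK)" by (simp add: ac_simps)
      then have "(C * SK) * (IC * BK) = 1" using CIC SB by simp
      then show "lc_mult (Rep_lf (C * SK)) (Rep_lf (IC * BK)) = lc_one"
        by (simp add: times_lf.rep_eq[symmetric] one_lf.rep_eq[symmetric])
    qed
    have "lc_normalize n X i = lc_mult (Rep_lf (IC * BK)) (Rep_lf (C * Y m i))"
      unfolding lc_normalize_def nrm inv using XR[OF i] by simp
    also have "\<dots> = Rep_lf ((C * IC) * (BK * Y m i))"
      by (simp add: times_lf.rep_eq[symmetric] ac_simps)
    also have "\<dots> = lc_mult (B k) (Rep_lf (Y m i))" using CIC by (simp add: times_lf.rep_eq RBK)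
    finally show "lc_normalize n ((lc_mat_vec n A ^^ (k + K0)) x) i = lc_mult (B k) (Rep_lf (Y (k + K0) i))"
      unfolding X_def m_def .
  qed
  show ?thesis
    unfolding lc_vec_wk_conv_def
  proof (intro allI impI)
    fix i assume i: "i < n"
    define d where "d k = lc_sub (lc_mult (B k) (Rep_lf (Y (k + K0) i))) (lc_mult Binf (w 0 i))" for k
    show "lc_wk_conv (\<lambda>k. lc_normalize n ((lc_mat_vec n A ^^ k) x) i) (lc_normalize n (w 0) i)"
    proof (rule wk_conv_shift[OF M, where d=d])
      show "\<forall>k. inM M (d k)" unfolding d_def
        by (intro allI inM_sub inM_mult B(1) YM i M Binf(1) wM n0)
      have "conv (\<lambda>k. lc_mult (B k) (Rep_lf (Y (k + K0) i))) (lc_mult Binf (w 0 i))"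
        by (rule conv_mult[OF M _ _ Bconv conv_shift[OF Yconv[OF i]] Binf(1) wM[OF n0 i]])
           (use B(1) YM[OF i] in auto)
      then have "conv d (lc_sub (lc_mult Binf (w 0 i)) (lc_mult Binf (w 0 i)))"
        unfolding d_def by (rule conv_sub[OF _ conv_const])
      then show "\<forall>q. (\<lambda>k. d k q) \<longlonglongrightarrow> 0" unfolding conv_def lc_sub_def by simp
      show "\<forall>k. lc_sub (lc_normalize n ((lc_mat_vec n A ^^ (k + K0)) x) i) (lc_normalize n (w 0) i) = d k"
        unfolding d_def using nx[OF i] nw[OF i] by simp
    qed
  qed
qed

end
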